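(* For $n\ge1$, the 2-group $\mathsf{Equiv}_{\mathbf{2Mat}_{\mathbb C}}(n)$ satisfies $\pi_0\cong S_n$, $\pi_1\cong(\mathbb C^* )^n$ with $S_n$ acting by $(\sigma\cdot\boldsymbol\lambda)_i=\lambda_{\sigma^{-1}(i)}$, its classifying class in $H^3(S_n,(\mathbb C^* )^n)$ is trivial, and it is equivalent to the split 2-group $\mathbb G(n)=S_n[0]\ltimes(\mathbb C^* )^n[1]$. An explicit equivalence of 2-groups $\mathbb E(n):\mathbb G(n)\to\mathsf{Equiv}_{\mathbf{2Mat}_{\mathbb C}}(n)$ is given by $\mathbb E(n)(\sigma)=(\mathbf P(\sigma),\mathbf I)$ on objects, by sending a morphism $(\sigma,\boldsymbol\lambda)$ to the 2-automorphism of $(\mathbf P(\sigma),\mathbf I)$ whose only nonempty entries are the $1\times1$ matrices $\lambda_{\sigma(j)}$ in position $(\sigma(j),j)$, $j=1,\dots,n$, and with structural isomorphisms $\mathbb E(n)_2(\sigma,\sigma')=1_{(\mathbf P(\sigma\sigma'),\mathbf I)}$.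
   Context: $\mathbf{2Mat}_{\mathbb C}$: objects integers $n\ge0$; for $n,m\ge1$ a 1-morphism $n\to m$ is $(\mathbf R,s)$ with $\mathbf R$ an $m\times n$ matrix over $\mathbb N$ and $s=(s_i)$ a gauge, $s_i(\mathbf a)\in GL((\mathbf R\mathbf a)_i,\mathbb C)$ for $\mathbf a\in\mathbb N^n$ (equal to $1$ if $(\mathbf R\mathbf a)_i=0$), normalized by $s_i(\mathbf e_j)=\mathbf I_{R_{ij}}$; a 2-morphism $(\mathbf R,s)\Rightarrow(\mathbf R',s')$ is an $m\times n$ array with $(i,j)$ entry an $R'_{ij}\times R_{ij}$ complex matrix if $R_{ij},R'_{ij}\ne0$, empty otherwise; vertical composition entrywise product; composition of 1-morphisms $(\tilde{\mathbf R},\tilde s)\circ(\mathbf R,s)=(\tilde{\mathbf R}\mathbf R,\tilde s\ast s)$ with $(\tilde s\ast s)_k(\mathbf a)=\tilde s_k(\mathbf R\mathbf a)\big(\bigoplus_{i}\mathbf I_{\tilde R_{ki}}\otimes s_i(\mathbf a)\big)\mathbf P(\tilde{\mathbf R}_k,\mathbf R,\mathbf a)\big(\bigoplus_j \tilde s_k(\mathbf R\mathbf e_j)^{-1}\otimes\mathbf I_{a_j}\big)$, $\mathbf P(\cdot)$ fixed permutation matrices of the construction which are identities when $\tilde{\mathbf R}_k$ or $\mathbf a$ is a standard basis vector, $\mathbf R$ is an identity or $\mathbf R$ has one column; horizontal composition $(\tilde{\mathsf T}\circ\mathsf T)_{kj}=\tilde s'_k(\mathbf R'\mathbf e_j)\big(\bigoplus_i\tilde{\mathsf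 T}_{ki}\otimes\mathsf T_{ij}\big)\tilde s_k(\mathbf R\mathbf e_j)^{-1}$; identity $(\mathbf I_n,\mathbf I)$, $\mathbf I$ the trivial gauge. $\mathsf{Equiv}_{\mathfrak C}(X)$ is the 2-group (monoidal groupoid, tensor = composition) of autoequivalences of $X$ and invertible 2-morphisms. $\mathbf P(\sigma)_{ij}=\delta_{i,\sigma(j)}$. The split 2-group $\mathbb G(n)$ has objects $S_n$, morphisms only automorphisms $(\sigma,\boldsymbol\lambda):\sigma\to\sigma$ with $\boldsymbol\lambda\in(\mathbb C^* )^n$, composition $(\sigma,\boldsymbol\lambda')\circ(\sigma,\boldsymbol\lambda)=(\sigma,\boldsymbol\lambda'\boldsymbol\lambda)$, tensor $\sigma\otimes\sigma'=\sigma\sigma'$, $(\sigma_1,\boldsymbol\lambda_1)\otimes(\sigma_2,\boldsymbol\lambda_2)=(\sigma_1\sigma_2,\boldsymbol\lambda_1(\sigma_1\cdot\boldsymbol\lambda_2))$, and identity associator and unit constraints. For a 2-group, $\pi_0$ is the group of isomorphism classes of objects, $\pi_1=\mathrm{Aut}(I)$ with $\pi_0$-action $[A]\cdot u=\gamma_A^{-1}\delta_A(u)$ ($\gamma_A(u)=l_A(u\otimes\mathrm{id}_A)l_A^{-1}$, $\delta_A(u)=r_A(\mathrm{id}_A\otimes u)r_A^{-1}$), and the classifying class is Sinh's invariant in $H^3(\pi_0,\pi_1)$. An equivalence of 2-groups is a monoidal functor whose underlying functor is an equivalence. *)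

theory Defs
  imports "Jordan_Normal_Form.Matrix" "HOL-Algebra.Sym_Groups"
begin

section \<open>Generic monoidal groupoids (2-groups)\<close>

record ('o, 'm) mgpd =
  tg_obj   :: "'o set"
  tg_hom   :: "'o \<Rightarrow> 'o \<Rightarrow> 'm set"
  tg_comp  :: "'m \<Rightarrow> 'm \<Rightarrow> 'm"          (* tg_comp g f = g after f *)
  tg_id    :: "'o \<Rightarrow> 'm"
  tg_tens  :: "'o \<Rightarrow> 'o \<Rightarrow> 'o"
  tg_tensm :: "'m \<Rightarrow> 'm \<Rightarrow> 'm"
  tg_unit  :: "'o"
  tg_assoc :: "'o \<Rightarrow> 'o \<Rightarrow> 'o \<Rightarrow> 'm"    (* (A*B)*C -> A*(B*C) *)
  tg_lu    :: "'o \<Rightarrow> 'm"                (* I*A -> A *)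
  tg_ru    :: "'o \<Rightarrow> 'm"                (* A*I -> A *)

definition invm :: "('o, 'm) mgpd \<Rightarrow> 'o \<Rightarrow> 'o \<Rightarrow> 'm \<Rightarrow> 'm" where
  "invm G A B f = (THE g. g \<in> tg_hom G B A \<and> tg_comp G g f = tg_id G A \<and> tg_comp G f g = tg_id G B)"

definition iso_mor :: "('o, 'm) mgpd \<Rightarrow> 'o \<Rightarrow> 'o \<Rightarrow> 'm \<Rightarrow> bool" where
  "iso_mor G A B f \<longleftrightarrow> f \<in> tg_hom G A B \<and>
     (\<exists>g \<in> tg_hom G B A. tg_comp G g f = tg_id G A \<and> tg_comp G f g = tg_id G B)"

definition iso_obj :: "('o, 'm) mgpd \<Rightarrow> 'o \<Rightarrow> 'o \<Rightarrow> bool" where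
  "iso_obj G A B \<longleftrightarrow> (\<exists>f. iso_mor G A B f)"

definition isorel :: "('o, 'm) mgpd \<Rightarrow> ('o \<times> 'o) set" where
  "isorel G = {(A, B). A \<in> tg_obj G \<and> B \<in> tg_obj G \<and> iso_obj G A B}"

definition isoclass :: "('o, 'm) mgpd \<Rightarrow> 'o \<Rightarrow> 'o set" where
  "isoclass G A = isorel G `` {A}"

definition pi0 :: "('o, 'm) mgpd \<Rightarrow> 'o set monoid" where
  "pi0 G = \<lparr> carrier = tg_obj G // isorel G,
             mult = (\<lambda>X Y. isoclass G (tg_tens G (SOME A. A \<in> X) (SOME B. B \<in> Y))),
             one = isoclass G (tg_unit G) \<rparr>"

definition pi1 :: "('o, 'm) mgpd \<Rightarrow> 'm monoid" where
  "pi1 G = \<lparr> carrier = tg_hom G (tg_unit G) (tg_unit G),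
             mult = tg_comp G, one = tg_id G (tg_unit G) \<rparr>"

definition gam :: "('o, 'm) mgpd \<Rightarrow> 'o \<Rightarrow> 'm \<Rightarrow> 'm" where
  "gam G A u = tg_comp G (tg_lu G A)
      (tg_comp G (tg_tensm G u (tg_id G A))
         (invm G (tg_tens G (tg_unit G) A) A (tg_lu G A)))"

definition del :: "('o, 'm) mgpd \<Rightarrow> 'o \<Rightarrow> 'm \<Rightarrow> 'm" where
  "del G A u = tg_comp G (tg_ru G A)
      (tg_comp G (tg_tensm G (tg_id G A) u)
         (invm G (tg_tens G A (tg_unit G)) A (tg_ru G A)))"

definition gam_inv :: "('o, 'm) mgpd \<Rightarrow> 'o \<Rightarrow> 'm \<Rightarrow> 'm" where
  "gam_inv G A v = (THE u. u \<in> tg_hom G (tg_unit G) (tg_unit G) \<and> gam G A u = v)"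

definition act :: "('o, 'm) mgpd \<Rightarrow> 'o \<Rightarrow> 'm \<Rightarrow> 'm" where
  "act G A u = gam_inv G A (del G A u)"

text \<open>Sinh's 3-cocycle attached to a choice of representatives rep and
  isomorphisms phi X Y : rep X * rep Y -> rep (XY).\<close>
definition sinh_cocycle ::
  "('o, 'm) mgpd \<Rightarrow> ('o set \<Rightarrow> 'o) \<Rightarrow> ('o set \<Rightarrow> 'o set \<Rightarrow> 'm) \<Rightarrow> 'o set \<Rightarrow> 'o set \<Rightarrow> 'o set \<Rightarrow> 'm" where
  "sinh_cocycle G rep phi X Y Z =
    (let P = pi0 G; XY = X \<otimes>\<^bsub>P\<^esub> Y; YZ = Y \<otimes>\<^bsub>P\<^esub> Z; XYZ = XY \<otimes>\<^bsub>P\<^esub> Z;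
         path1 = tg_comp G (phi XY Z) (tg_tensm G (phi X Y) (tg_id G (rep Z)));
         path2 = tg_comp G (phi X YZ)
                   (tg_comp G (tg_tensm G (tg_id G (rep X)) (phi Y Z))
                      (tg_assoc G (rep X) (rep Y) (rep Z)));
         src = tg_tens G (tg_tens G (rep X) (rep Y)) (rep Z)
     in gam_inv G (rep XYZ) (tg_comp G path1 (invm G src (rep (X \<otimes>\<^bsub>P\<^esub> YZ)) path2)))"

text \<open>The classifying (Sinh) class in H^3(pi_0, pi_1) is trivial: for every choice of
  representatives and structure isomorphisms the cocycle is a coboundary
  (group cohomology with the action above, written multiplicatively).\<close>
definition sinh_trivial :: "('o, 'm) mgpd \<Rightarrow> bool" where
  "sinh_trivial G \<longleftrightarrow>
    (\<forall>rep phi.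
      (\<forall>X \<in> carrier (pi0 G). rep X \<in> X) \<and>
      (\<forall>X \<in> carrier (pi0 G). \<forall>Y \<in> carrier (pi0 G).
          iso_mor G (tg_tens G (rep X) (rep Y)) (rep (X \<otimes>\<^bsub>pi0 G\<^esub> Y)) (phi X Y))
      \<longrightarrow>
      (\<exists>h. (\<forall>X \<in> carrier (pi0 G). \<forall>Y \<in> carrier (pi0 G). h X Y \<in> carrier (pi1 G)) \<and>
           (\<forall>X \<in> carrier (pi0 G). \<forall>Y \<in> carrier (pi0 G). \<forall>Z \<in> carrier (pi0 G).
              sinh_cocycle G rep phi X Y Z =
                act G (rep X) (h Y Z) \<otimes>\<^bsub>pi1 G\<^esub> inv\<^bsub>pi1 G\<^esub> (h (X \<otimes>\<^bsub>pi0 G\<^esub> Y) Z)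
                \<otimes>\<^bsub>pi1 G\<^esub> h X (Y \<otimes>\<^bsub>pi0 G\<^esub> Z) \<otimes>\<^bsub>pi1 G\<^esub> inv\<^bsub>pi1 G\<^esub> (h X Y))))"

definition mon_functor ::
  "('o, 'm) mgpd \<Rightarrow> ('p, 'n) mgpd \<Rightarrow> ('o \<Rightarrow> 'p) \<Rightarrow> ('m \<Rightarrow> 'n) \<Rightarrow> ('o \<Rightarrow> 'o \<Rightarrow> 'n) \<Rightarrow> 'n \<Rightarrow> bool" where
  "mon_functor G H F0 F1 F2 Fu \<longleftrightarrow>
    (\<forall>A \<in> tg_obj G. F0 A \<in> tg_obj H) \<and>
    (\<forall>A \<in> tg_obj G. \<forall>B \<in> tg_obj G. \<forall>f \<in> tg_hom G A B. F1 f \<in> tg_hom H (F0 A) (F0 B)) \<and>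
    (\<forall>A \<in> tg_obj G. \<forall>B \<in> tg_obj G. \<forall>C \<in> tg_obj G. \<forall>f \<in> tg_hom G A B. \<forall>g \<in> tg_hom G B C.
        F1 (tg_comp G g f) = tg_comp H (F1 g) (F1 f)) \<and>
    (\<forall>A \<in> tg_obj G. F1 (tg_id G A) = tg_id H (F0 A)) \<and>
    (\<forall>A \<in> tg_obj G. \<forall>B \<in> tg_obj G.
        iso_mor H (tg_tens H (F0 A) (F0 B)) (F0 (tg_tens G A B)) (F2 A B)) \<and>
    iso_mor H (tg_unit H) (F0 (tg_unit G)) Fu \<and>
    (\<forall>A \<in> tg_obj G. \<forall>A' \<in> tg_obj G. \<forall>B \<in> tg_obj G. \<forall>B' \<in> tg_obj G.
       \<forall>f \<in> tg_hom G A A'. \<forall>g \<in> tg_hom G B B'.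
        tg_comp H (F2 A' B') (tg_tensm H (F1 f) (F1 g)) = tg_comp H (F1 (tg_tensm G f g)) (F2 A B)) \<and>
    (\<forall>A \<in> tg_obj G. \<forall>B \<in> tg_obj G. \<forall>C \<in> tg_obj G.
        tg_comp H (F1 (tg_assoc G A B C))
          (tg_comp H (F2 (tg_tens G A B) C) (tg_tensm H (F2 A B) (tg_id H (F0 C))))
      = tg_comp H (F2 A (tg_tens G B C))
          (tg_comp H (tg_tensm H (tg_id H (F0 A)) (F2 B C)) (tg_assoc H (F0 A) (F0 B) (F0 C)))) \<and>
    (\<forall>A \<in> tg_obj G.
        tg_comp H (F1 (tg_lu G A)) (tg_comp H (F2 (tg_unit G) A) (tg_tensm H Fu (tg_id H (F0 A))))
      = tg_lu H (F0 A)) \<and>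
    (\<forall>A \<in> tg_obj G.
        tg_comp H (F1 (tg_ru G A)) (tg_comp H (F2 A (tg_unit G)) (tg_tensm H (tg_id H (F0 A)) Fu))
      = tg_ru H (F0 A))"

definition mon_equiv ::
  "('o, 'm) mgpd \<Rightarrow> ('p, 'n) mgpd \<Rightarrow> ('o \<Rightarrow> 'p) \<Rightarrow> ('m \<Rightarrow> 'n) \<Rightarrow> ('o \<Rightarrow> 'o \<Rightarrow> 'n) \<Rightarrow> 'n \<Rightarrow> bool" where
  "mon_equiv G H F0 F1 F2 Fu \<longleftrightarrow>
    mon_functor G H F0 F1 F2 Fu \<and>
    (\<forall>B \<in> tg_obj H. \<exists>A \<in> tg_obj G. iso_obj H (F0 A) B) \<and>
    (\<forall>A \<in> tg_obj G. \<forall>B \<in> tg_obj G. \<forall>g \<in> tg_hom H (F0 A) (F0 B). \<exists>f \<in> tg_hom G A B. F1 f = g) \<and>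
    (\<forall>A \<in> tg_obj G. \<forall>B \<in> tg_obj G. \<forall>f \<in> tg_hom G A B. \<forall>f' \<in> tg_hom G A B.
        F1 f = F1 f' \<longrightarrow> f = f')"

section \<open>The groups (C^*)^n and the split 2-group G(n)\<close>

text \<open>Indices run over {1..n}; vectors are extended by 1 outside.\<close>
definition cstar_vecs :: "nat \<Rightarrow> (nat \<Rightarrow> complex) set" where
  "cstar_vecs n = {l. (\<forall>i \<in> {1..n}. l i \<noteq> 0) \<and> (\<forall>i. i \<notin> {1..n} \<longrightarrow> l i = 1)}"

definition cstar_group :: "nat \<Rightarrow> (nat \<Rightarrow> complex) monoid" where
  "cstar_group n = \<lparr> carrier = cstar_vecs n, mult = (\<lambda>a b i. a i * b i), one = (\<lambda>i. 1) \<rparr>"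

definition perm_vec :: "(nat \<Rightarrow> nat) \<Rightarrow> (nat \<Rightarrow> complex) \<Rightarrow> (nat \<Rightarrow> complex)" where
  "perm_vec s l = (\<lambda>i. l (inv_into UNIV s i))"

definition Gsplit :: "nat \<Rightarrow> (nat \<Rightarrow> nat, (nat \<Rightarrow> nat) \<times> (nat \<Rightarrow> complex)) mgpd" where
  "Gsplit n = \<lparr>
     tg_obj = {s. s permutes {1..n}},
     tg_hom = (\<lambda>s t. if s = t then {(s, l) | l. l \<in> cstar_vecs n} else {}),
     tg_comp = (\<lambda>(s, l') (_, l). (s, \<lambda>i. l' i * l i)),
     tg_id = (\<lambda>s. (s, \<lambda>i. 1)),
     tg_tens = (\<lambda>s t. s \<circ> t),
     tg_tensm = (\<lambda>(s1, l1) (s2, l2). (s1 \<circ> s2, \<lambda>i. l1 i * perm_vec s1 l2 i)),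
     tg_unit = id,
     tg_assoc = (\<lambda>a b c. (a \<circ> b \<circ> c, \<lambda>i. 1)),
     tg_lu = (\<lambda>a. (a, \<lambda>i. 1)),
     tg_ru = (\<lambda>a. (a, \<lambda>i. 1)) \<rparr>"

section \<open>Gauged matrices: the endo-hom 2-category of n in 2Mat_C\<close>

text \<open>Index range {1..n}; N-matrices and N-vectors are 0 outside the range.\<close>
definition natvec :: "nat \<Rightarrow> (nat \<Rightarrow> nat) \<Rightarrow> bool" where
  "natvec n a \<longleftrightarrow> (\<forall>i. i \<notin> {1..n} \<longrightarrow> a i = 0)"

definition natmat :: "nat \<Rightarrow> (nat \<Rightarrow> nat \<Rightarrow> nat) \<Rightarrow> bool" where
  "natmat n R \<longleftrightarrow> (\<forall>i j. i \<notin> {1..n} \<or> j \<notin> {1..n} \<longrightarrow> R i j = 0)"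

definition evec :: "nat \<Rightarrow> nat \<Rightarrow> nat" where
  "evec j = (\<lambda>i. if i = j then 1 else 0)"

definition mvec :: "nat \<Rightarrow> (nat \<Rightarrow> nat \<Rightarrow> nat) \<Rightarrow> (nat \<Rightarrow> nat) \<Rightarrow> nat \<Rightarrow> nat" where
  "mvec n R a = (\<lambda>i. if i \<in> {1..n} then \<Sum>j\<in>{1..n}. R i j * a j else 0)"

definition mmul :: "nat \<Rightarrow> (nat \<Rightarrow> nat \<Rightarrow> nat) \<Rightarrow> (nat \<Rightarrow> nat \<Rightarrow> nat) \<Rightarrow> (nat \<Rightarrow> nat \<Rightarrow> nat)" where
  "mmul n R S = (\<lambda>i j. if i \<in> {1..n} \<and> j \<in> {1..n} then \<Sum>k\<in>{1..n}. R i k * S k j else 0)"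

definition idmat :: "nat \<Rightarrow> (nat \<Rightarrow> nat \<Rightarrow> nat)" where
  "idmat n = (\<lambda>i j. if i = j \<and> i \<in> {1..n} then 1 else 0)"

definition Pmat :: "nat \<Rightarrow> (nat \<Rightarrow> nat) \<Rightarrow> (nat \<Rightarrow> nat \<Rightarrow> nat)" where
  "Pmat n s = (\<lambda>i j. if i \<in> {1..n} \<and> j \<in> {1..n} \<and> i = s j then 1 else 0)"

type_synonym gauge = "nat \<Rightarrow> (nat \<Rightarrow> nat) \<Rightarrow> complex mat"
type_synonym onemor = "(nat \<Rightarrow> nat \<Rightarrow> nat) \<times> gauge"
type_synonym twocell = "nat \<Rightarrow> nat \<Rightarrow> complex mat"

definition is_gauge :: "nat \<Rightarrow> (nat \<Rightarrow> nat \<Rightarrow> nat) \<Rightarrow> gauge \<Rightarrow> bool" where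
  "is_gauge n R s \<longleftrightarrow>
    (\<forall>i \<in> {1..n}. \<forall>a. natvec n a \<longrightarrow>
        s i a \<in> carrier_mat (mvec n R a i) (mvec n R a i) \<and> invertible_mat (s i a)) \<and>
    (\<forall>i \<in> {1..n}. \<forall>j \<in> {1..n}. s i (evec j) = 1\<^sub>m (R i j)) \<and>
    (\<forall>i a. i \<notin> {1..n} \<or> \<not> natvec n a \<longrightarrow> s i a = 1\<^sub>m 0)"

definition is_onemor :: "nat \<Rightarrow> onemor \<Rightarrow> bool" where
  "is_onemor n A \<longleftrightarrow> natmat n (fst A) \<and> is_gauge n (fst A) (snd A)"

definition triv_gauge :: "nat \<Rightarrow> (nat \<Rightarrow> nat \<Rightarrow> nat) \<Rightarrow> gauge" where
  "triv_gauge n R = (\<lambda>i a. if i \<in> {1..n} \<and> natvec n a then 1\<^sub>m (mvec n R a i) else 1\<^sub>m 0)"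

definition id1 :: "nat \<Rightarrow> onemor" where
  "id1 n = (idmat n, triv_gauge n (idmat n))"

definition mat_inv :: "complex mat \<Rightarrow> complex mat" where
  "mat_inv A = (SOME B. inverts_mat A B \<and> inverts_mat B A)"

definition kron :: "complex mat \<Rightarrow> complex mat \<Rightarrow> complex mat" where
  "kron A B = mat (dim_row A * dim_row B) (dim_col A * dim_col B)
     (\<lambda>(i, j). A $$ (i div dim_row B, j div dim_col B) * B $$ (i mod dim_row B, j mod dim_col B))"

definition dsum :: "nat \<Rightarrow> (nat \<Rightarrow> complex mat) \<Rightarrow> complex mat" where
  "dsum n f = diag_block_mat (map f [1..<Suc n])"

text \<open>The permutation matrices P(row, R, a) of the construction are not specified in
  the source beyond the listed properties; they are a parameter Pm subject to them.\<close>
definition is_perm_mat :: "nat \<Rightarrow> complex mat \<Rightarrow> bool" where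
  "is_perm_mat N M \<longleftrightarrow> (\<exists>p. p permutes {0..<N} \<and> M = mat N N (\<lambda>(i, j). if i = p j then 1 else 0))"

definition admissible_P :: "nat \<Rightarrow> ((nat \<Rightarrow> nat) \<Rightarrow> (nat \<Rightarrow> nat \<Rightarrow> nat) \<Rightarrow> (nat \<Rightarrow> nat) \<Rightarrow> complex mat) \<Rightarrow> bool" where
  "admissible_P n Pm \<longleftrightarrow>
    (\<forall>r R a. natvec n r \<and> natmat n R \<and> natvec n a \<longrightarrow>
       is_perm_mat (\<Sum>i\<in>{1..n}. r i * mvec n R a i) (Pm r R a) \<and>
       ((\<exists>i \<in> {1..n}. r = evec i) \<or> (\<exists>j \<in> {1..n}. a = evec j) \<or> R = idmat n \<or> n = 1
          \<longrightarrow> Pm r R a = 1\<^sub>m (\<Sum>i\<in>{1..n}. r i * mvec n R a i)))"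

definition comp1 :: "nat \<Rightarrow> ((nat \<Rightarrow> nat) \<Rightarrow> (nat \<Rightarrow> nat \<Rightarrow> nat) \<Rightarrow> (nat \<Rightarrow> nat) \<Rightarrow> complex mat)
     \<Rightarrow> onemor \<Rightarrow> onemor \<Rightarrow> onemor" where
  "comp1 n Pm At A =
    (let Rt = fst At; st = snd At; R = fst A; s = snd A in
     (mmul n Rt R,
      \<lambda>k a. if k \<in> {1..n} \<and> natvec n a then
               st k (mvec n R a)
             * dsum n (\<lambda>i. kron (1\<^sub>m (Rt k i)) (s i a))
             * Pm (Rt k) R a
             * dsum n (\<lambda>j. kron (mat_inv (st k (mvec n R (evec j)))) (1\<^sub>m (a j)))
           else 1\<^sub>m 0))"

text \<open>2-morphisms (R,s) => (R',s'): arrays whose (i,j) entry is an R'_ij x R_ij matrix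
  (empty when R_ij = 0 or R'_ij = 0), and the 0x0 matrix outside the index range.\<close>
definition is_twocell :: "nat \<Rightarrow> (nat \<Rightarrow> nat \<Rightarrow> nat) \<Rightarrow> (nat \<Rightarrow> nat \<Rightarrow> nat) \<Rightarrow> twocell \<Rightarrow> bool" where
  "is_twocell n R R' T \<longleftrightarrow>
    (\<forall>i \<in> {1..n}. \<forall>j \<in> {1..n}. T i j \<in> carrier_mat (R' i j) (R i j)) \<and>
    (\<forall>i j. i \<notin> {1..n} \<or> j \<notin> {1..n} \<longrightarrow> T i j = 1\<^sub>m 0)"

definition vcomp2 :: "twocell \<Rightarrow> twocell \<Rightarrow> twocell" where
  "vcomp2 T' T = (\<lambda>i j. T' i j * T i j)"

definition id2 :: "nat \<Rightarrow> (nat \<Rightarrow> nat \<Rightarrow> nat) \<Rightarrow> twocell" where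
  "id2 n R = (\<lambda>i j. if i \<in> {1..n} \<and> j \<in> {1..n} then 1\<^sub>m (R i j) else 1\<^sub>m 0)"

definition hcomp2 :: "nat \<Rightarrow> onemor \<Rightarrow> onemor \<Rightarrow> twocell \<Rightarrow> onemor \<Rightarrow> onemor \<Rightarrow> twocell \<Rightarrow> twocell" where
  "hcomp2 n At At' Tt A A' T =
    (\<lambda>k j. if k \<in> {1..n} \<and> j \<in> {1..n} then
       snd At' k (mvec n (fst A') (evec j))
       * dsum n (\<lambda>i. kron (Tt k i) (T i j))
       * mat_inv (snd At k (mvec n (fst A) (evec j)))
     else 1\<^sub>m 0)"

definition inv_twocell :: "nat \<Rightarrow> onemor \<Rightarrow> onemor \<Rightarrow> twocell \<Rightarrow> bool" where
  "inv_twocell n A B T \<longleftrightarrow> is_twocell n (fst A) (fst B) T \<and>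
     (\<exists>T'. is_twocell n (fst B) (fst A) T' \<and>
           vcomp2 T' T = id2 n (fst A) \<and> vcomp2 T T' = id2 n (fst B))"

definition is_autoequiv :: "nat \<Rightarrow> ((nat \<Rightarrow> nat) \<Rightarrow> (nat \<Rightarrow> nat \<Rightarrow> nat) \<Rightarrow> (nat \<Rightarrow> nat) \<Rightarrow> complex mat)
     \<Rightarrow> onemor \<Rightarrow> bool" where
  "is_autoequiv n Pm A \<longleftrightarrow> is_onemor n A \<and>
     (\<exists>B. is_onemor n B \<and>
          (\<exists>T. inv_twocell n (comp1 n Pm B A) (id1 n) T) \<and>
          (\<exists>T. inv_twocell n (comp1 n Pm A B) (id1 n) T))"

text \<open>The 2-group Equiv(n): morphisms are triples (source, 2-cell, target);
  2Mat_C is a (strict) 2-category, so associator and unitors are identities.\<close>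
definition EquivMat :: "nat \<Rightarrow> ((nat \<Rightarrow> nat) \<Rightarrow> (nat \<Rightarrow> nat \<Rightarrow> nat) \<Rightarrow> (nat \<Rightarrow> nat) \<Rightarrow> complex mat)
     \<Rightarrow> (onemor, onemor \<times> twocell \<times> onemor) mgpd" where
  "EquivMat n Pm = \<lparr>
     tg_obj = {A. is_autoequiv n Pm A},
     tg_hom = (\<lambda>A B. {(A, T, B) | T. inv_twocell n A B T}),
     tg_comp = (\<lambda>(B, T', C) (A, T, B'). (A, vcomp2 T' T, C)),
     tg_id = (\<lambda>A. (A, id2 n (fst A), A)),
     tg_tens = comp1 n Pm,
     tg_tensm = (\<lambda>(At, Tt, At') (A, T, A'). (comp1 n Pm At A, hcomp2 n At At' Tt A A' T, comp1 n Pm At' A')),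
     tg_unit = id1 n,
     tg_assoc = (\<lambda>A B C. (comp1 n Pm (comp1 n Pm A B) C, id2 n (fst (comp1 n Pm (comp1 n Pm A B) C)),
                            comp1 n Pm A (comp1 n Pm B C))),
     tg_lu = (\<lambda>A. (comp1 n Pm (id1 n) A, id2 n (fst A), A)),
     tg_ru = (\<lambda>A. (comp1 n Pm A (id1 n), id2 n (fst A), A)) \<rparr>"

section \<open>The explicit equivalence E(n) : G(n) -> Equiv(n)\<close>

definition E0 :: "nat \<Rightarrow> (nat \<Rightarrow> nat) \<Rightarrow> onemor" where
  "E0 n s = (Pmat n s, triv_gauge n (Pmat n s))"

definition E1 :: "nat \<Rightarrow> (nat \<Rightarrow> nat) \<times> (nat \<Rightarrow> complex) \<Rightarrow> onemor \<times> twocell \<times> onemor" where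
  "E1 n m = (let s = fst m; l = snd m in
     (E0 n s,
      \<lambda>i j. if i \<in> {1..n} \<and> j \<in> {1..n} \<and> i = s j then mat 1 1 (\<lambda>_. l (s j)) else 1\<^sub>m (Pmat n s i j),
      E0 n s))"

definition E2 :: "nat \<Rightarrow> (nat \<Rightarrow> nat) \<Rightarrow> (nat \<Rightarrow> nat) \<Rightarrow> onemor \<times> twocell \<times> onemor" where
  "E2 n s t = (E0 n (s \<circ> t), id2 n (Pmat n (s \<circ> t)), E0 n (s \<circ> t))"

definition Eu :: "nat \<Rightarrow> onemor \<times> twocell \<times> onemor" where
  "Eu n = (id1 n, id2 n (idmat n), id1 n)"

end

theory Submission
  imports Defs
begin


lemma carrier00: "A \<in> carrier_mat 0 0 \<Longrightarrow> A = 1\<^sub>m 0"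
  by (rule eq_matI) auto

lemma mat11: "A \<in> carrier_mat 1 1 \<Longrightarrow> A = mat 1 1 (\<lambda>_. A $$ (0,0))"
  by (rule eq_matI) auto

lemma one11: "1\<^sub>m 1 = mat 1 1 (\<lambda>_. 1)"
  by (rule eq_matI) auto

lemma mat11_mult: "mat 1 1 (\<lambda>_. a) * mat 1 1 (\<lambda>_. b) = mat 1 1 (\<lambda>_. a * b :: complex)"
  by (rule eq_matI) (auto simp: scalar_prod_def)

lemma mat11_eq: "mat 1 1 (\<lambda>_. a) = mat 1 1 (\<lambda>_. b) \<longleftrightarrow> a = b"
proof
  assume "mat 1 1 (\<lambda>_. a) = mat 1 1 (\<lambda>_. b)"
  hence "mat 1 1 (\<lambda>_. a) $$ (0,0) = mat 1 1 (\<lambda>_. b) $$ (0,(0::nat))" by simp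
  thus "a = b" by simp
qed simp

lemma one0_mult: "1\<^sub>m 0 * (1\<^sub>m 0 :: complex mat) = 1\<^sub>m 0"
  by simp

lemma kron_zero_right: "kron A (1\<^sub>m 0) = 1\<^sub>m 0"
  unfolding kron_def by (rule eq_matI) auto

lemma kron_zero_left: "kron (1\<^sub>m 0) A = 1\<^sub>m 0"
  unfolding kron_def by (rule eq_matI) auto

lemma kron_one1: "kron (1\<^sub>m 1) A = A"
  unfolding kron_def by (rule eq_matI) auto

lemma kron11: "kron (mat 1 1 (\<lambda>_. a)) (mat 1 1 (\<lambda>_. b)) = mat 1 1 (\<lambda>_. a * b)"
  unfolding kron_def by (rule eq_matI) auto

lemma sq_inv_dims:
  assumes "A \<in> carrier_mat p p" "inverts_mat A B" "inverts_mat B A"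
  shows "B \<in> carrier_mat p p"
proof -
  have 1: "A * B = 1\<^sub>m p" using assms unfolding inverts_mat_def by auto
  have 2: "B * A = 1\<^sub>m (dim_row B)" using assms unfolding inverts_mat_def by auto
  have "dim_col B = p" using arg_cong[OF 1, of dim_col] by simp
  moreover have "dim_row B = p" using arg_cong[OF 2, of dim_col] assms(1) by simp
  ultimately show ?thesis by auto
qed

lemma mat_inv_one: "mat_inv (1\<^sub>m p) = (1\<^sub>m p :: complex mat)"
proof -
  have ex: "\<exists>B. inverts_mat (1\<^sub>m p) B \<and> inverts_mat B (1\<^sub>m p :: complex mat)"
    by (rule exI[of _ "1\<^sub>m p"]) (simp add: inverts_mat_def)
  have "inverts_mat (1\<^sub>m p) (mat_inv (1\<^sub>m p)) \<and> inverts_mat (mat_inv (1\<^sub>m p)) (1\<^sub>m p :: complex mat)"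
    unfolding mat_inv_def by (rule someI_ex[OF ex])
  moreover then have "mat_inv (1\<^sub>m p) \<in> carrier_mat p (p::nat)"
    using sq_inv_dims[of "1\<^sub>m p" p] by auto
  ultimately show ?thesis unfolding inverts_mat_def by auto
qed

lemma invertible_one: "invertible_mat (1\<^sub>m p :: complex mat)"
  unfolding invertible_mat_def square_mat.simps inverts_mat_def
  by (auto intro!: exI[of _ "1\<^sub>m p"])

lemma invertible_carrier:
  assumes "invertible_mat A" "A \<in> carrier_mat p p"
  obtains B where "B \<in> carrier_mat p p" "A * B = 1\<^sub>m p" "B * A = (1\<^sub>m p :: complex mat)"
proof -
  obtain B where "inverts_mat A B" "inverts_mat B A" using assms unfolding invertible_mat_def by auto
  moreover then have "B \<in> carrier_mat p p" using sq_inv_dims assms by blast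
  ultimately show ?thesis using that assms unfolding inverts_mat_def by auto
qed

lemma invertible_mult:
  assumes "invertible_mat A" "A \<in> carrier_mat p p" "invertible_mat B" "B \<in> carrier_mat p p"
  shows "invertible_mat (A * B :: complex mat)"
proof -
  obtain A' where A': "A' \<in> carrier_mat p p" "A * A' = 1\<^sub>m p" "A' * A = 1\<^sub>m p"
    using invertible_carrier assms(1,2) by blast
  obtain B' where B': "B' \<in> carrier_mat p p" "B * B' = 1\<^sub>m p" "B' * B = 1\<^sub>m p"
    using invertible_carrier assms(3,4) by blast
  have "A * B * (B' * A') = A * (B * (B' * A'))"
    using assms A' B' by (metis assoc_mult_mat mult_carrier_mat)
  also have "B * (B' * A') = (B * B') * A'"
    using assms A' B' by (metis assoc_mult_mat mult_carrier_mat)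
  finally have 1: "A * B * (B' * A') = 1\<^sub>m p" using A' B' by simp
  have "B' * A' * (A * B) = B' * (A' * (A * B))"
    using assms A' B' by (metis assoc_mult_mat mult_carrier_mat)
  also have "A' * (A * B) = (A' * A) * B"
    using assms A' B' by (metis assoc_mult_mat mult_carrier_mat)
  finally have 2: "B' * A' * (A * B) = 1\<^sub>m p" using A' B' assms by simp
  show ?thesis unfolding invertible_mat_def inverts_mat_def
    using 1 2 assms A' B' by (auto intro!: exI[of _ "B' * A'"])
qed

lemma dbm_zero_cons: "diag_block_mat (1\<^sub>m 0 # As) = diag_block_mat (As :: complex mat list)"
  by (rule eq_matI) (auto simp: Let_def)

lemma dbm_cons_zeros:
  "(\<forall>A\<in>set As. A = 1\<^sub>m 0) \<Longrightarrow> diag_block_mat (B # As) = (B :: complex mat)"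
proof -
  assume a: "\<forall>A\<in>set As. A = 1\<^sub>m 0"
  have "diag_block_mat As = 1\<^sub>m 0" using a
    by (induct As) (auto simp: dbm_zero_cons intro: eq_matI)
  thus ?thesis by (auto simp: Let_def intro!: eq_matI)
qed

lemma dbm_single:
  "(\<forall>x\<in>set xs. f x = 1\<^sub>m 0) \<Longrightarrow> (\<forall>x\<in>set ys. f x = 1\<^sub>m 0) \<Longrightarrow>
   diag_block_mat (map f (xs @ z # ys)) = (f z :: complex mat)"
  by (induct xs) (simp_all del: diag_block_mat.simps add: dbm_zero_cons dbm_cons_zeros)

lemma dsum_single:
  assumes "z \<in> {1..n}" "\<And>i. i \<in> {1..n} \<Longrightarrow> i \<noteq> z \<Longrightarrow> f i = 1\<^sub>m 0"
  shows "dsum n f = f z"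
proof -
  have eq: "[1..<Suc n] = [1..<z] @ z # [Suc z..<Suc n]"
  proof -
    have "[1..<Suc n] = [1..<z] @ [z..<z + (Suc n - z)]"
      using assms(1) upt_add_eq_append[of 1 z "Suc n - z"] by auto
    also have "[z..<z + (Suc n - z)] = z # [Suc z..<Suc n]"
      using assms(1) by (simp add: upt_conv_Cons)
    finally show ?thesis .
  qed
  show ?thesis unfolding dsum_def eq
    by (rule dbm_single) (use assms in auto)
qed



section \<open>Permutation matrices\<close>

declare atLeastAtMost_iff[simp del] One_nat_def[simp del]

abbreviation pinv :: "(nat \<Rightarrow> nat) \<Rightarrow> nat \<Rightarrow> nat" where "pinv s \<equiv> inv_into UNIV s"


lemma perm_inv_eq: "s permutes {1..n} \<Longrightarrow> (k = s j) \<longleftrightarrow> (pinv s k = j)"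
  using permutes_inverses[of s "{1..n}"] by auto

lemma perm_in: "s permutes {1..n} \<Longrightarrow> (s j \<in> {1..n}) \<longleftrightarrow> (j \<in> {1..n})"
  by (rule permutes_in_image)

lemma perm_inv_in: "s permutes {1..n} \<Longrightarrow> (pinv s j \<in> {1..n}) \<longleftrightarrow> (j \<in> {1..n})"
  by (rule permutes_in_image[OF permutes_inv])

lemma perm_out: "s permutes {1..n} \<Longrightarrow> j \<notin> {1..n} \<Longrightarrow> s j = j"
  by (simp add: permutes_def)

lemma perm_inv_out: "s permutes {1..n} \<Longrightarrow> j \<notin> {1..n} \<Longrightarrow> pinv s j = j"
  using permutes_inv[of s "{1..n}"] by (rule perm_out)

lemma Pmat_row: "s permutes {1..n} \<Longrightarrow> k \<in> {1..n} \<Longrightarrow> Pmat n s k = evec (pinv s k)"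
  unfolding Pmat_def evec_def
  by (auto simp: perm_inv_eq[of s n k] perm_inv_in fun_eq_iff)

lemma mvec_Pmat: "s permutes {1..n} \<Longrightarrow> mvec n (Pmat n s) a = (\<lambda>i. if i \<in> {1..n} then a (pinv s i) else 0)"
proof (rule ext)
  fix i assume s: "s permutes {1..n}"
  show "mvec n (Pmat n s) a i = (if i \<in> {1..n} then a (pinv s i) else 0)"
  proof (cases "i \<in> {1..n}")
    case True
    have "(\<Sum>j\<in>{1..n}. Pmat n s i j * a j) = (\<Sum>j\<in>{1..n}. if j = pinv s i then a j else 0)"
      by (rule sum.cong) (auto simp: Pmat_def perm_inv_eq[OF s] True)
    also have "\<dots> = a (pinv s i)" using True perm_inv_in[OF s] by simp
    finally show ?thesis unfolding mvec_def using True by simp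
  qed (simp add: mvec_def)
qed

lemma mvec_evec: "i \<in> {1..n} \<Longrightarrow> j \<in> {1..n} \<Longrightarrow> mvec n R (evec j) i = R i j"
  unfolding mvec_def evec_def by (simp add: if_distrib cong: if_cong)

lemma mvec_Pmat_evec: "s permutes {1..n} \<Longrightarrow> j \<in> {1..n} \<Longrightarrow> mvec n (Pmat n s) (evec j) = evec (s j)"
  by (auto simp: mvec_Pmat evec_def fun_eq_iff perm_inv_eq perm_in perm_inv_in)

lemma mvec_Pmat_comp: "s permutes {1..n} \<Longrightarrow> t permutes {1..n} \<Longrightarrow>
   mvec n (Pmat n s) (mvec n (Pmat n t) a) = mvec n (Pmat n (s \<circ> t)) a"
proof -
  assume s: "s permutes {1..n}" and t: "t permutes {1..n}"
  have st: "s \<circ> t permutes {1..n}" by (rule permutes_compose[OF t s])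
  have "pinv (s \<circ> t) = pinv t \<circ> pinv s"
    using s t by (meson o_inv_distrib permutes_bij)
  thus ?thesis using s t st by (auto simp: mvec_Pmat fun_eq_iff perm_inv_in)
qed

lemma mmul_Pmat: "s permutes {1..n} \<Longrightarrow> t permutes {1..n} \<Longrightarrow>
   mmul n (Pmat n s) (Pmat n t) = Pmat n (s \<circ> t)"
proof (intro ext)
  fix i j assume s: "s permutes {1..n}" and t: "t permutes {1..n}"
  show "mmul n (Pmat n s) (Pmat n t) i j = Pmat n (s \<circ> t) i j"
  proof (cases "i \<in> {1..n} \<and> j \<in> {1..n}")
    case True
    have "(\<Sum>k\<in>{1..n}. Pmat n s i k * Pmat n t k j) = (\<Sum>k\<in>{1..n}. if k = t j then Pmat n s i k else 0)"
      by (rule sum.cong) (use True in \<open>auto simp: Pmat_def\<close>)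
    also have "\<dots> = Pmat n s i (t j)" using True perm_in[OF t] by simp
    finally show ?thesis using True perm_in[OF t] unfolding mmul_def by (simp add: Pmat_def)
  qed (auto simp: mmul_def Pmat_def)
qed

lemma Pmat_id: "Pmat n id = idmat n"
  unfolding Pmat_def idmat_def by (auto simp: fun_eq_iff)

lemma Pmat_inj: "s permutes {1..n} \<Longrightarrow> t permutes {1..n} \<Longrightarrow> Pmat n s = Pmat n t \<Longrightarrow> s = t"
proof (rule ext)
  fix j assume s: "s permutes {1..n}" and t: "t permutes {1..n}" and eq: "Pmat n s = Pmat n t"
  show "s j = t j"
  proof (cases "j \<in> {1..n}")
    case True
    have "Pmat n s (s j) j = 1" using True perm_in[OF s] by (simp add: Pmat_def)
    hence "Pmat n t (s j) j = 1" using eq by simp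
    thus ?thesis by (simp add: Pmat_def split: if_splits)
  next
    case False thus ?thesis using perm_out[OF s False] perm_out[OF t False] by simp
  qed
qed

lemma natmat_Pmat: "natmat n (Pmat n s)"
  unfolding natmat_def Pmat_def by auto

lemma natvec_evec: "j \<in> {1..n} \<Longrightarrow> natvec n (evec j)"
  unfolding natvec_def evec_def by auto

lemma natvec_mvec: "natvec n (mvec n R a)"
  unfolding natvec_def mvec_def by auto

lemma natmat_mmul: "natmat n (mmul n R S)"
  unfolding natmat_def mmul_def by auto

lemma Pmat_le1: "Pmat n s i j \<le> 1"
  unfolding Pmat_def by auto

lemma idmat_le1: "idmat n i j \<le> 1"
  unfolding idmat_def by auto

lemma is_gauge_triv: "is_gauge n R (triv_gauge n R)"
  unfolding is_gauge_def triv_gauge_def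
  by (auto simp: invertible_one mvec_evec natvec_evec)

lemma onemor_E0: "is_onemor n (E0 n s)"
  unfolding is_onemor_def E0_def by (simp add: natmat_Pmat is_gauge_triv)

lemma fst_E0[simp]: "fst (E0 n s) = Pmat n s"
  unfolding E0_def by simp

lemma id1_E0: "id1 n = E0 n id"
  unfolding id1_def E0_def Pmat_id by simp

lemma gauge_norm: "is_gauge n R g \<Longrightarrow> i \<in> {1..n} \<Longrightarrow> j \<in> {1..n} \<Longrightarrow> g i (evec j) = 1\<^sub>m (R i j)"
  unfolding is_gauge_def by blast

lemma gauge_carrier: "is_gauge n R g \<Longrightarrow> i \<in> {1..n} \<Longrightarrow> natvec n a \<Longrightarrow>
   g i a \<in> carrier_mat (mvec n R a i) (mvec n R a i) \<and> invertible_mat (g i a)"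
  unfolding is_gauge_def by blast



lemma comp1_fst[simp]: "fst (comp1 n Pm A' A) = mmul n (fst A') (fst A)"
  by (simp add: comp1_def Let_def)

lemma comp1_snd_in: "k \<in> {1..n} \<Longrightarrow> natvec n a \<Longrightarrow> snd (comp1 n Pm At A) k a =
   snd At k (mvec n (fst A) a) * dsum n (\<lambda>i. kron (1\<^sub>m (fst At k i)) (snd A i a))
   * Pm (fst At k) (fst A) a
   * dsum n (\<lambda>j. kron (mat_inv (snd At k (mvec n (fst A) (evec j)))) (1\<^sub>m (a j)))"
  by (simp add: comp1_def Let_def)

lemma comp1_snd_out: "\<not> (k \<in> {1..n} \<and> natvec n a) \<Longrightarrow> snd (comp1 n Pm At A) k a = 1\<^sub>m 0"
  unfolding comp1_def Let_def by auto

lemma natvec_Pmat_row: "natvec n (Pmat n s k)"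
  unfolding natvec_def Pmat_def by auto

lemma comp1_gauge:
  assumes s: "s permutes {1..n}" and t: "t permutes {1..n}"
    and gA': "is_gauge n (Pmat n s) g'" and gA: "is_gauge n (Pmat n t) g"
    and adm: "admissible_P n Pm" and k: "k \<in> {1..n}" and a: "natvec n a"
  shows "snd (comp1 n Pm (Pmat n s, g') (Pmat n t, g)) k a = g' k (mvec n (Pmat n t) a) * g (pinv s k) a"
    and "g' k (mvec n (Pmat n t) a) \<in> carrier_mat (a (pinv t (pinv s k))) (a (pinv t (pinv s k)))"
    and "g (pinv s k) a \<in> carrier_mat (a (pinv t (pinv s k))) (a (pinv t (pinv s k)))"
    and "invertible_mat (g' k (mvec n (Pmat n t) a))"
    and "invertible_mat (g (pinv s k) a)"
proof -
  define z where "z = pinv s k"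
  define N where "N = a (pinv t z)"
  have z: "z \<in> {1..n}" unfolding z_def using k perm_inv_in[OF s] by simp
  have wz: "pinv t z \<in> {1..n}" using z perm_inv_in[OF t] by simp
  have h1: "mvec n (Pmat n s) (mvec n (Pmat n t) a) k = N"
    using k z unfolding N_def z_def by (simp add: mvec_Pmat s t)
  have h2: "mvec n (Pmat n t) a z = N"
    using z unfolding N_def by (simp add: mvec_Pmat t)
  have F1: "g' k (mvec n (Pmat n t) a) \<in> carrier_mat N N" "invertible_mat (g' k (mvec n (Pmat n t) a))"
    using gauge_carrier[OF gA' k natvec_mvec] h1 by auto
  have F2c: "g z a \<in> carrier_mat N N" "invertible_mat (g z a)"
    using gauge_carrier[OF gA z a] h2 by auto
  have F2: "dsum n (\<lambda>i. kron (1\<^sub>m (Pmat n s k i)) (g i a)) = g z a"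
  proof -
    have "dsum n (\<lambda>i. kron (1\<^sub>m (Pmat n s k i)) (g i a)) = kron (1\<^sub>m (Pmat n s k z)) (g z a)"
      by (rule dsum_single[OF z]) (simp add: Pmat_row[OF s k] z_def evec_def kron_zero_left)
    also have "Pmat n s k z = 1" by (simp add: Pmat_row[OF s k] z_def evec_def)
    finally show ?thesis by (simp add: kron_one1)
  qed
  have F3: "Pm (Pmat n s k) (Pmat n t) a = 1\<^sub>m N"
  proof -
    have "Pmat n s k = evec z" by (simp add: Pmat_row[OF s k] z_def)
    hence "Pm (Pmat n s k) (Pmat n t) a = 1\<^sub>m (\<Sum>i\<in>{1..n}. Pmat n s k i * mvec n (Pmat n t) a i)"
      using adm[unfolded admissible_P_def, rule_format, of "Pmat n s k" "Pmat n t" a]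
        natmat_Pmat natvec_Pmat_row a z by blast
    also have "(\<Sum>i\<in>{1..n}. Pmat n s k i * mvec n (Pmat n t) a i) = N"
      using h1 k unfolding mvec_def[of n "Pmat n s"] by simp
    finally show ?thesis .
  qed
  have F4: "dsum n (\<lambda>j. kron (mat_inv (g' k (mvec n (Pmat n t) (evec j)))) (1\<^sub>m (a j))) = 1\<^sub>m N"
  proof -
    have e: "g' k (mvec n (Pmat n t) (evec j)) = 1\<^sub>m (if j = pinv t z then 1 else 0)" if j: "j \<in> {1..n}" for j
    proof -
      have "g' k (mvec n (Pmat n t) (evec j)) = 1\<^sub>m (Pmat n s k (t j))"
        using mvec_Pmat_evec[OF t j] gauge_norm[OF gA' k] perm_in[OF t] j by simp
      also have "Pmat n s k (t j) = evec z (t j)" using Pmat_row[OF s k] z_def by simp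
      also have "\<dots> = (if j = pinv t z then 1 else 0)"
        unfolding evec_def using perm_inv_eq[OF t, of z j] by auto
      finally show ?thesis .
    qed
    have "dsum n (\<lambda>j. kron (mat_inv (g' k (mvec n (Pmat n t) (evec j)))) (1\<^sub>m (a j)))
        = kron (mat_inv (g' k (mvec n (Pmat n t) (evec (pinv t z))))) (1\<^sub>m (a (pinv t z)))"
      by (rule dsum_single[OF wz]) (simp add: e mat_inv_one kron_zero_left)
    also have "\<dots> = 1\<^sub>m N" using e[OF wz] by (simp add: mat_inv_one kron_one1 N_def)
    finally show ?thesis .
  qed
  have "snd (comp1 n Pm (Pmat n s, g') (Pmat n t, g)) k a
      = g' k (mvec n (Pmat n t) a) * g z a * 1\<^sub>m N * 1\<^sub>m N"
    using comp1_snd_in[OF k a, of Pm "(Pmat n s, g')" "(Pmat n t, g)"] F2 F3 F4 by simp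
  also have "\<dots> = g' k (mvec n (Pmat n t) a) * g z a"
    using F1 F2c by simp
  finally show "snd (comp1 n Pm (Pmat n s, g') (Pmat n t, g)) k a = g' k (mvec n (Pmat n t) a) * g (pinv s k) a"
    unfolding z_def .
  show "g' k (mvec n (Pmat n t) a) \<in> carrier_mat (a (pinv t (pinv s k))) (a (pinv t (pinv s k)))"
    "invertible_mat (g' k (mvec n (Pmat n t) a))"
    using F1 unfolding N_def z_def by auto
  show "g (pinv s k) a \<in> carrier_mat (a (pinv t (pinv s k))) (a (pinv t (pinv s k)))"
    "invertible_mat (g (pinv s k) a)"
    using F2c unfolding N_def z_def by auto
qed

lemma pinv_comp: "s permutes {1..n} \<Longrightarrow> t permutes {1..n} \<Longrightarrow> pinv (s \<circ> t) = pinv t \<circ> pinv s"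
  by (meson o_inv_distrib permutes_bij)

lemma pinv_comp_app: "s permutes {1..n} \<Longrightarrow> t permutes {1..n} \<Longrightarrow> pinv (s \<circ> t) k = pinv t (pinv s k)"
  using pinv_comp[of s n t] by (simp only: o_apply)

lemma one_carrier_eq: "1\<^sub>m x \<in> carrier_mat N M \<Longrightarrow> 1\<^sub>m x = (1\<^sub>m N :: complex mat)"
  unfolding carrier_mat_def by simp

lemma comp1_E0:
  assumes s: "s permutes {1..n}" and t: "t permutes {1..n}" and adm: "admissible_P n Pm"
  shows "comp1 n Pm (E0 n s) (E0 n t) = E0 n (s \<circ> t)"
proof -
  have st: "s \<circ> t permutes {1..n}" by (rule permutes_compose[OF t s])
  have "snd (comp1 n Pm (E0 n s) (E0 n t)) k a = triv_gauge n (Pmat n (s \<circ> t)) k a" for k a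
  proof (cases "k \<in> {1..n} \<and> natvec n a")
    case True
    hence k: "k \<in> {1..n}" and a: "natvec n a" by auto
    note c = comp1_gauge[OF s t is_gauge_triv is_gauge_triv adm k a]
    have "snd (comp1 n Pm (E0 n s) (E0 n t)) k a
      = triv_gauge n (Pmat n s) k (mvec n (Pmat n t) a) * triv_gauge n (Pmat n t) (pinv s k) a"
      unfolding E0_def by (rule c(1))
    also have "\<dots> = 1\<^sub>m (a (pinv t (pinv s k)))"
    proof -
      have z: "pinv s k \<in> {1..n}" using k perm_inv_in[OF s, of k] by blast
      have e1: "triv_gauge n (Pmat n s) k (mvec n (Pmat n t) a) = 1\<^sub>m (mvec n (Pmat n s) (mvec n (Pmat n t) a) k)"
        unfolding triv_gauge_def using k natvec_mvec[of n "Pmat n t" a] by (simp only: if_True simp_thms)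
      have e2: "triv_gauge n (Pmat n t) (pinv s k) a = 1\<^sub>m (mvec n (Pmat n t) a (pinv s k))"
        unfolding triv_gauge_def using z a by (simp only: if_True simp_thms)
      have "triv_gauge n (Pmat n s) k (mvec n (Pmat n t) a) = 1\<^sub>m (a (pinv t (pinv s k)))"
        using c(2) unfolding e1 by (rule one_carrier_eq)
      moreover have "triv_gauge n (Pmat n t) (pinv s k) a = 1\<^sub>m (a (pinv t (pinv s k)))"
        using c(3) unfolding e2 by (rule one_carrier_eq)
      ultimately show ?thesis by simp
    qed
    also have "\<dots> = triv_gauge n (Pmat n (s \<circ> t)) k a"
      using k a by (simp add: triv_gauge_def mvec_Pmat[OF st] pinv_comp_app[OF s t])
    finally show ?thesis .
  next
    case False
    have "triv_gauge n (Pmat n (s \<circ> t)) k a = 1\<^sub>m 0" unfolding triv_gauge_def using False by auto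
    thus ?thesis using comp1_snd_out[OF False] by simp
  qed
  moreover have "fst (comp1 n Pm (E0 n s) (E0 n t)) = Pmat n (s \<circ> t)"
    by (simp add: mmul_Pmat s t)
  ultimately show ?thesis unfolding E0_def by (simp add: prod_eq_iff fun_eq_iff)
qed

lemma comp1_onemor:
  assumes s: "s permutes {1..n}" and t: "t permutes {1..n}" and adm: "admissible_P n Pm"
    and A': "is_onemor n A'" "fst A' = Pmat n s" and A: "is_onemor n A" "fst A = Pmat n t"
  shows "is_onemor n (comp1 n Pm A' A)" "fst (comp1 n Pm A' A) = Pmat n (s \<circ> t)"
proof -
  have st: "s \<circ> t permutes {1..n}" by (rule permutes_compose[OF t s])
  show fst: "fst (comp1 n Pm A' A) = Pmat n (s \<circ> t)" using A' A by (simp add: mmul_Pmat s t)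
  obtain g' where g': "A' = (Pmat n s, g')" using A'(2) by (metis prod.collapse)
  obtain g where g: "A = (Pmat n t, g)" using A(2) by (metis prod.collapse)
  have gA': "is_gauge n (Pmat n s) g'" using A'(1) g' unfolding is_onemor_def by simp
  have gA: "is_gauge n (Pmat n t) g" using A(1) g unfolding is_onemor_def by simp
  note c = comp1_gauge[OF s t gA' gA adm]
  let ?G = "snd (comp1 n Pm A' A)"
  have P1: "\<forall>k\<in>{1..n}. \<forall>a. natvec n a \<longrightarrow> ?G k a \<in> carrier_mat (mvec n (Pmat n (s \<circ> t)) a k) (mvec n (Pmat n (s \<circ> t)) a k) \<and>
          invertible_mat (?G k a)"
  proof (intro ballI allI impI)
    fix k a assume k: "k \<in> {1..n}" and a: "natvec n a"
    have "mvec n (Pmat n (s \<circ> t)) a k = a (pinv (s \<circ> t) k)"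
      using k by (simp add: mvec_Pmat[OF st])
    also have "\<dots> = a (pinv t (pinv s k))" by (simp only: pinv_comp_app[OF s t])
    finally have dim: "mvec n (Pmat n (s \<circ> t)) a k = a (pinv t (pinv s k))" .
    have m1: "g' k (mvec n (Pmat n t) a) * g (pinv s k) a \<in> carrier_mat (a (pinv t (pinv s k))) (a (pinv t (pinv s k)))"
      by (rule mult_carrier_mat[OF c(2)[OF k a] c(3)[OF k a]])
    have m2: "invertible_mat (g' k (mvec n (Pmat n t) a) * g (pinv s k) a)"
      by (rule invertible_mult[OF c(4)[OF k a] c(2)[OF k a] c(5)[OF k a] c(3)[OF k a]])
    show "snd (comp1 n Pm A' A) k a \<in> carrier_mat (mvec n (Pmat n (s \<circ> t)) a k) (mvec n (Pmat n (s \<circ> t)) a k) \<and>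
          invertible_mat (snd (comp1 n Pm A' A) k a)"
      using m1 m2 dim c(1)[OF k a] g g' by simp
  qed
  have P2: "\<forall>k\<in>{1..n}. \<forall>j\<in>{1..n}. ?G k (evec j) = 1\<^sub>m (Pmat n (s \<circ> t) k j)"
  proof (intro ballI)
    fix k j assume k: "k \<in> {1..n}" and j: "j \<in> {1..n}"
    have tj: "t j \<in> {1..n}" using j perm_in[OF t] by simp
    have z: "pinv s k \<in> {1..n}" using k perm_inv_in[OF s] by simp
    have eq: "Pmat n s k (t j) = Pmat n (s \<circ> t) k j" "Pmat n t (pinv s k) j = Pmat n (s \<circ> t) k j"
      using k j tj z perm_inv_eq[OF s, of k "t j"] by (auto simp: Pmat_def)
    show "snd (comp1 n Pm A' A) k (evec j) = 1\<^sub>m (Pmat n (s \<circ> t) k j)"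
      using c(1)[OF k natvec_evec[OF j]] g g' gauge_norm[OF gA' k tj] gauge_norm[OF gA z j] mvec_Pmat_evec[OF t j] eq by simp
  qed
  have P3: "\<forall>k a. k \<notin> {1..n} \<or> \<not> natvec n a \<longrightarrow> ?G k a = 1\<^sub>m 0"
    using comp1_snd_out by blast
  have "is_gauge n (Pmat n (s \<circ> t)) ?G" unfolding is_gauge_def using P1 P2 P3 by blast
  thus "is_onemor n (comp1 n Pm A' A)" unfolding is_onemor_def using fst natmat_Pmat by simp
qed



section \<open>Permutation-shaped 2-cells\<close>

definition pcell :: "nat \<Rightarrow> (nat \<Rightarrow> nat) \<Rightarrow> (nat \<Rightarrow> complex) \<Rightarrow> twocell" where
  "pcell n s c = (\<lambda>i j. if i \<in> {1..n} \<and> j \<in> {1..n} \<and> i = s j then mat 1 1 (\<lambda>_. c i) else 1\<^sub>m 0)"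

definition cvec :: "nat \<Rightarrow> (nat \<Rightarrow> nat) \<Rightarrow> twocell \<Rightarrow> nat \<Rightarrow> complex" where
  "cvec n s T = (\<lambda>i. if i \<in> {1..n} then T i (pinv s i) $$ (0,0) else 1)"

lemma E1_pcell: "E1 n (s, l) = (E0 n s, pcell n s l, E0 n s)"
  unfolding E1_def pcell_def Pmat_def by (auto simp: fun_eq_iff Let_def)

lemma id2_Pmat: "id2 n (Pmat n s) = pcell n s (\<lambda>_. 1)"
  unfolding id2_def pcell_def Pmat_def by (auto simp: fun_eq_iff one11)

lemma vcomp2_pcell: "vcomp2 (pcell n s a) (pcell n s b) = pcell n s (\<lambda>i. a i * b i)"
  unfolding vcomp2_def pcell_def by (auto simp: fun_eq_iff mat11_mult)

lemma pcell_cong: "(\<And>i. i \<in> {1..n} \<Longrightarrow> a i = b i) \<Longrightarrow> pcell n s a = pcell n s b"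
  unfolding pcell_def by (auto simp: fun_eq_iff)

lemma pcell_eq_iff: "s permutes {1..n} \<Longrightarrow> pcell n s a = pcell n s b \<longleftrightarrow> (\<forall>i\<in>{1..n}. a i = b i)"
proof
  assume s: "s permutes {1..n}" and eq: "pcell n s a = pcell n s b"
  show "\<forall>i\<in>{1..n}. a i = b i"
  proof
    fix i assume i: "i \<in> {1..n}"
    have j: "pinv s i \<in> {1..n}" "i = s (pinv s i)" using i perm_inv_in[OF s] perm_inv_eq[OF s] by auto
    have "pcell n s a i (pinv s i) = pcell n s b i (pinv s i)" using eq by simp
    thus "a i = b i" using i j unfolding pcell_def by (simp add: mat11_eq)
  qed
qed (rule pcell_cong, auto)

lemma is_twocell_pcell: "is_twocell n (Pmat n s) (Pmat n s) (pcell n s c)"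
  unfolding is_twocell_def pcell_def Pmat_def by auto

lemma twocell_pcell:
  assumes s: "s permutes {1..n}" and T: "is_twocell n (Pmat n s) (Pmat n s) T"
  shows "T = pcell n s (cvec n s T)"
proof (intro ext)
  fix i j
  show "T i j = pcell n s (cvec n s T) i j"
  proof (cases "i \<in> {1..n} \<and> j \<in> {1..n}")
    case True
    hence c: "T i j \<in> carrier_mat (Pmat n s i j) (Pmat n s i j)" using T unfolding is_twocell_def by auto
    show ?thesis
    proof (cases "i = s j")
      case True2: True
      hence "Pmat n s i j = 1" using True by (simp add: Pmat_def)
      hence "T i j = mat 1 1 (\<lambda>_. T i j $$ (0,0))" using c mat11 by simp
      moreover have "pinv s i = j" using True2 perm_inv_eq[OF s] by simp
      ultimately show ?thesis using True True2 unfolding pcell_def cvec_def by simp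
    next
      case False
      hence "Pmat n s i j = 0" by (simp add: Pmat_def)
      hence "T i j = 1\<^sub>m 0" using c carrier00 by simp
      thus ?thesis using False unfolding pcell_def by simp
    qed
  next
    case False
    thus ?thesis using T unfolding is_twocell_def pcell_def by auto
  qed
qed

lemma inv_twocell_pcell:
  assumes s: "s permutes {1..n}" and X: "fst X = Pmat n s" and Y: "fst Y = Pmat n s"
    and T: "inv_twocell n X Y T"
  shows "T = pcell n s (cvec n s T)" "cvec n s T \<in> cstar_vecs n"
proof -
  have Tc: "is_twocell n (Pmat n s) (Pmat n s) T" using T X Y unfolding inv_twocell_def by simp
  show eq: "T = pcell n s (cvec n s T)" by (rule twocell_pcell[OF s Tc])
  obtain T' where T': "is_twocell n (Pmat n s) (Pmat n s) T'" "vcomp2 T' T = id2 n (Pmat n s)"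
    using T X Y unfolding inv_twocell_def by auto
  have eq': "T' = pcell n s (cvec n s T')" by (rule twocell_pcell[OF s T'(1)])
  have "pcell n s (\<lambda>i. cvec n s T' i * cvec n s T i) = pcell n s (\<lambda>_. 1)"
    using T'(2) eq eq' by (metis id2_Pmat vcomp2_pcell)
  hence "\<forall>i\<in>{1..n}. cvec n s T' i * cvec n s T i = 1" by (simp add: pcell_eq_iff[OF s])
  hence "\<forall>i\<in>{1..n}. cvec n s T i \<noteq> 0" by (metis mult_zero_right zero_neq_one)
  thus "cvec n s T \<in> cstar_vecs n" unfolding cstar_vecs_def cvec_def by auto
qed

lemma inv_twocell_pcellI:
  assumes X: "fst X = Pmat n s" and Y: "fst Y = Pmat n s" and c: "\<And>i. i \<in> {1..n} \<Longrightarrow> c i \<noteq> 0"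
  shows "inv_twocell n X Y (pcell n s c)"
proof -
  have "vcomp2 (pcell n s (\<lambda>i. 1 / c i)) (pcell n s c) = id2 n (Pmat n s)"
    unfolding vcomp2_pcell id2_Pmat by (rule pcell_cong) (simp add: c)
  moreover have "vcomp2 (pcell n s c) (pcell n s (\<lambda>i. 1 / c i)) = id2 n (Pmat n s)"
    unfolding vcomp2_pcell id2_Pmat by (rule pcell_cong) (simp add: c)
  ultimately show ?thesis unfolding inv_twocell_def X Y
    using is_twocell_pcell by blast
qed

section \<open>Dimension argument\<close>

lemma dimD:
  fixes A B :: "complex mat"
  assumes A: "A \<in> carrier_mat a b" and B: "B \<in> carrier_mat b a"
    and BA: "B * A = 1\<^sub>m b" and AB: "A * B = 1\<^sub>m a" and a1: "a \<le> 1"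
  shows "a = b"
proof (cases "a = 0")
  case True
  show ?thesis
  proof (rule ccontr)
    assume "a \<noteq> b"
    hence b: "0 < b" using True by simp
    have "(B * A) $$ (0,0) = row B 0 \<bullet> col A 0" using A B b by simp
    also have "\<dots> = 0" using A B True unfolding scalar_prod_def by simp
    finally show False using BA b by simp
  qed
next
  case False
  hence a: "a = 1" using a1 by simp
  show ?thesis
  proof (rule ccontr)
    assume ne: "a \<noteq> b"
    show False
    proof (cases "b = 0")
      case True
      have "(A * B) $$ (0,0) = row A 0 \<bullet> col B 0" using A B a by simp
      also have "\<dots> = 0" using A B True unfolding scalar_prod_def by simp
      finally show False using AB a by simp
    next
      case False
      hence b2: "2 \<le> b" using ne a by simp
      have e: "(B * A) $$ (i,j) = B $$ (i,0) * A $$ (0,j)" if "i < b" "j < b" for i j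
        using A B a that by (simp add: scalar_prod_def One_nat_def)
      have "B $$ (0,0) * A $$ (0,0) = 1" using e[of 0 0] BA b2 by simp
      moreover have "B $$ (1,0) * A $$ (0,1) = 1" using e[of 1 1] BA b2 by simp
      moreover have "B $$ (0,0) * A $$ (0,1) = 0" using e[of 0 1] BA b2 by simp
      ultimately show False by (metis mult_zero_left mult_zero_right zero_neq_one mult_eq_0_iff)
    qed
  qed
qed

lemma inv_twocell_dims:
  assumes T: "inv_twocell n X Y T" and i: "i \<in> {1..n}" and j: "j \<in> {1..n}" and le: "fst Y i j \<le> 1"
  shows "fst Y i j = fst X i j"
proof -
  obtain T' where T': "is_twocell n (fst Y) (fst X) T'" "vcomp2 T' T = id2 n (fst X)" "vcomp2 T T' = id2 n (fst Y)"
    using T unfolding inv_twocell_def by auto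
  have Tc: "T i j \<in> carrier_mat (fst Y i j) (fst X i j)" using T i j unfolding inv_twocell_def is_twocell_def by auto
  have T'c: "T' i j \<in> carrier_mat (fst X i j) (fst Y i j)" using T' i j unfolding is_twocell_def by auto
  have "T' i j * T i j = 1\<^sub>m (fst X i j)" using fun_cong[OF fun_cong[OF T'(2), of i], of j] i j
    unfolding vcomp2_def id2_def by simp
  moreover have "T i j * T' i j = 1\<^sub>m (fst Y i j)" using fun_cong[OF fun_cong[OF T'(3), of i], of j] i j
    unfolding vcomp2_def id2_def by simp
  ultimately show ?thesis using dimD[OF Tc T'c] le by simp
qed



section \<open>Invertible natural matrices are permutation matrices\<close>

lemma natinv_perm:
  assumes R: "natmat n R" and S: "natmat n S"
    and RS: "\<And>i j. i \<in> {1..n} \<Longrightarrow> j \<in> {1..n} \<Longrightarrow> mmul n R S i j = idmat n i j"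
    and SR: "\<And>i j. i \<in> {1..n} \<Longrightarrow> j \<in> {1..n} \<Longrightarrow> mmul n S R i j = idmat n i j"
  shows "\<exists>s. s permutes {1..n} \<and> R = Pmat n s"
proof -
  let ?r = "{1..n}"
  have sumRS: "(\<Sum>m\<in>?r. R i m * S m j) = idmat n i j" if "i \<in> ?r" "j \<in> ?r" for i j
    using RS[OF that] that unfolding mmul_def by simp
  have sumSR: "(\<Sum>m\<in>?r. S i m * R m j) = idmat n i j" if "i \<in> ?r" "j \<in> ?r" for i j
    using SR[OF that] that unfolding mmul_def by simp
  have le_sum: "f m \<le> (\<Sum>m\<in>?r. f m)" if "m \<in> ?r" for f :: "nat \<Rightarrow> nat" and m
    using that by (intro member_le_sum) auto
  have ex: "\<exists>k. k \<in> ?r \<and> S j k \<noteq> 0 \<and> R k j \<noteq> 0" if j: "j \<in> ?r" for j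
  proof (rule ccontr)
    assume "\<not> ?thesis"
    hence "(\<Sum>m\<in>?r. S j m * R m j) = 0" by (auto intro!: sum.neutral)
    moreover have "(\<Sum>m\<in>?r. S j m * R m j) = 1" using sumSR[OF j j] j by (simp add: idmat_def)
    ultimately show False by simp
  qed
  define f where "f j = (SOME k. k \<in> ?r \<and> S j k \<noteq> 0 \<and> R k j \<noteq> 0)" for j
  have fp: "f j \<in> ?r \<and> S j (f j) \<noteq> 0 \<and> R (f j) j \<noteq> 0" if "j \<in> ?r" for j
    unfolding f_def by (rule someI_ex[OF ex[OF that]])
  have c1: "i = f j" if i: "i \<in> ?r" and j: "j \<in> ?r" and nz: "R i j \<noteq> 0" for i j
  proof -
    have "0 < R i j * S j (f j)" using nz fp[OF j] by simp
    hence "1 \<le> R i j * S j (f j)" by linarith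
    also have "\<dots> \<le> (\<Sum>m\<in>?r. R i m * S m (f j))" using le_sum[OF j] .
    also have "\<dots> = idmat n i (f j)" using sumRS i fp[OF j] by simp
    finally show ?thesis by (simp add: idmat_def split: if_splits)
  qed
  have c2: "R (f j) j = 1" if j: "j \<in> ?r" for j
  proof -
    have "0 < S j (f j)" using fp[OF j] by simp
    hence "R (f j) j \<le> R (f j) j * S j (f j)" by simp
    also have "\<dots> \<le> (\<Sum>m\<in>?r. R (f j) m * S m (f j))" using le_sum[OF j] .
    also have "\<dots> = 1" using sumRS fp[OF j] by (simp add: idmat_def)
    finally show ?thesis using fp[OF j] by simp
  qed
  have inj: "inj_on f ?r"
  proof (rule inj_onI)
    fix j j' assume j: "j \<in> ?r" and j': "j' \<in> ?r" and eq: "f j = f j'"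
    have "0 < S j (f j) * R (f j) j'" using fp[OF j] fp[OF j'] eq by simp
    hence "1 \<le> S j (f j) * R (f j) j'" by linarith
    also have "\<dots> \<le> (\<Sum>m\<in>?r. S j m * R m j')" using le_sum[of "f j" "\<lambda>m. S j m * R m j'"] fp[OF j] by blast
    also have "\<dots> = idmat n j j'" using sumSR j j' by simp
    finally show "j = j'" by (simp add: idmat_def split: if_splits)
  qed
  have img: "f ` ?r = ?r" using endo_inj_surj[of ?r f] inj fp by auto
  define s where "s j = (if j \<in> ?r then f j else j)" for j
  have bs: "bij_betw s ?r ?r"
  proof -
    have "bij_betw f ?r ?r" using inj img by (simp add: bij_betw_def)
    moreover have "\<And>j. j \<in> ?r \<Longrightarrow> s j = f j" unfolding s_def by simp
    ultimately show ?thesis by (metis bij_betw_cong)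
  qed
  have sp: "s permutes ?r" by (rule bij_imp_permutes[OF bs]) (simp add: s_def)
  have "R = Pmat n s"
  proof (intro ext)
    fix i j
    show "R i j = Pmat n s i j"
    proof (cases "i \<in> ?r \<and> j \<in> ?r")
      case True
      show ?thesis
      proof (cases "i = f j")
        case True2: True
        thus ?thesis using True c2 by (simp add: Pmat_def s_def)
      next
        case False
        thus ?thesis using True c1 by (auto simp: Pmat_def s_def)
      qed
    next
      case False
      thus ?thesis using R unfolding natmat_def Pmat_def by auto
    qed
  qed
  thus ?thesis using sp by blast
qed

context
  fixes n :: nat and Pm :: "(nat \<Rightarrow> nat) \<Rightarrow> (nat \<Rightarrow> nat \<Rightarrow> nat) \<Rightarrow> (nat \<Rightarrow> nat) \<Rightarrow> complex mat"
begin

abbreviation "HH \<equiv> EquivMat n Pm"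

lemma H_obj: "tg_obj HH = {A. is_autoequiv n Pm A}" by (simp add: EquivMat_def)
lemma H_hom: "tg_hom HH A B = {(A, T, B) | T. inv_twocell n A B T}" by (simp add: EquivMat_def)
lemma H_comp: "tg_comp HH (B, T', C) (A, T, B') = (A, vcomp2 T' T, C)" by (simp add: EquivMat_def)
lemma H_id: "tg_id HH A = (A, id2 n (fst A), A)" by (simp add: EquivMat_def)
lemma H_tens: "tg_tens HH A B = comp1 n Pm A B" by (simp add: EquivMat_def)
lemma H_tensm: "tg_tensm HH (At, Tt, At') (A, T, A') = (comp1 n Pm At A, hcomp2 n At At' Tt A A' T, comp1 n Pm At' A')"
  by (simp add: EquivMat_def)
lemma H_unit: "tg_unit HH = id1 n" by (simp add: EquivMat_def)
lemma H_assoc: "tg_assoc HH A B C = (comp1 n Pm (comp1 n Pm A B) C, id2 n (fst (comp1 n Pm (comp1 n Pm A B) C)),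
                            comp1 n Pm A (comp1 n Pm B C))" by (simp add: EquivMat_def)
lemma H_lu: "tg_lu HH A = (comp1 n Pm (id1 n) A, id2 n (fst A), A)" by (simp add: EquivMat_def)
lemma H_ru: "tg_ru HH A = (comp1 n Pm A (id1 n), id2 n (fst A), A)" by (simp add: EquivMat_def)

lemma obj_iff: "A \<in> tg_obj HH \<longleftrightarrow> is_onemor n A \<and> (\<exists>s. s permutes {1..n} \<and> fst A = Pmat n s)"
proof
  assume "A \<in> tg_obj HH"
  hence ae: "is_autoequiv n Pm A" by (simp add: H_obj)
  then obtain B T1 T2 where A: "is_onemor n A" and B: "is_onemor n B"
    and T1: "inv_twocell n (comp1 n Pm B A) (id1 n) T1" and T2: "inv_twocell n (comp1 n Pm A B) (id1 n) T2"
    unfolding is_autoequiv_def by blast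
  have fid: "fst (id1 n) = idmat n" by (simp add: id1_def)
  have SR: "mmul n (fst B) (fst A) i j = idmat n i j" if "i \<in> {1..n}" "j \<in> {1..n}" for i j
    using inv_twocell_dims[OF T1 that] fid idmat_le1 by simp
  have RS: "mmul n (fst A) (fst B) i j = idmat n i j" if "i \<in> {1..n}" "j \<in> {1..n}" for i j
    using inv_twocell_dims[OF T2 that] fid idmat_le1 by simp
  have "\<exists>s. s permutes {1..n} \<and> fst A = Pmat n s"
    by (rule natinv_perm[OF _ _ RS SR]) (use A B in \<open>auto simp: is_onemor_def\<close>)
  thus "is_onemor n A \<and> (\<exists>s. s permutes {1..n} \<and> fst A = Pmat n s)" using A by blast
next
  assume "is_onemor n A \<and> (\<exists>s. s permutes {1..n} \<and> fst A = Pmat n s)"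
  then obtain s where A: "is_onemor n A" and s: "s permutes {1..n}" and fA: "fst A = Pmat n s" by blast
  have si: "pinv s permutes {1..n}" using permutes_inv[OF s] .
  have fid: "fst (id1 n) = Pmat n id" by (simp add: id1_def Pmat_id)
  have f1: "fst (comp1 n Pm (E0 n (pinv s)) A) = Pmat n id"
    using fA by (simp add: mmul_Pmat[OF si s] permutes_inv_o(2)[OF s])
  have f2: "fst (comp1 n Pm A (E0 n (pinv s))) = Pmat n id"
    using fA by (simp add: mmul_Pmat[OF s si] permutes_inv_o(1)[OF s])
  have "inv_twocell n (comp1 n Pm (E0 n (pinv s)) A) (id1 n) (pcell n id (\<lambda>_. 1))"
    by (rule inv_twocell_pcellI[OF f1 fid]) simp
  moreover have "inv_twocell n (comp1 n Pm A (E0 n (pinv s))) (id1 n) (pcell n id (\<lambda>_. 1))"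
    by (rule inv_twocell_pcellI[OF f2 fid]) simp
  ultimately have "is_autoequiv n Pm A"
    unfolding is_autoequiv_def using A onemor_E0 by blast
  thus "A \<in> tg_obj HH" by (simp add: H_obj)
qed

lemma E0_obj: "s permutes {1..n} \<Longrightarrow> E0 n s \<in> tg_obj HH"
  using obj_iff onemor_E0 by auto

lemma hom_iff: "f \<in> tg_hom HH A B \<longleftrightarrow> (\<exists>T. f = (A, T, B) \<and> inv_twocell n A B T)"
  by (auto simp: H_hom)

lemma iso_mor_pcell:
  assumes s: "s permutes {1..n}" and X: "fst X = Pmat n s" and Y: "fst Y = Pmat n s"
    and c: "\<And>i. i \<in> {1..n} \<Longrightarrow> c i \<noteq> 0"
  shows "iso_mor HH X Y (X, pcell n s c, Y)"
proof -
  have c': "\<And>i. i \<in> {1..n} \<Longrightarrow> 1 / c i \<noteq> 0" using c by simp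
  have h1: "(X, pcell n s c, Y) \<in> tg_hom HH X Y" using inv_twocell_pcellI[OF X Y c] by (simp add: H_hom)
  have h2: "(Y, pcell n s (\<lambda>i. 1 / c i), X) \<in> tg_hom HH Y X" using inv_twocell_pcellI[OF Y X c'] by (simp add: H_hom)
  have e1: "vcomp2 (pcell n s (\<lambda>i. 1 / c i)) (pcell n s c) = id2 n (fst X)"
    unfolding vcomp2_pcell X id2_Pmat by (rule pcell_cong) (simp add: c)
  have e2: "vcomp2 (pcell n s c) (pcell n s (\<lambda>i. 1 / c i)) = id2 n (fst Y)"
    unfolding vcomp2_pcell Y id2_Pmat by (rule pcell_cong) (simp add: c)
  show ?thesis unfolding iso_mor_def using h1 h2 e1 e2
    by (auto simp: H_comp H_id intro!: bexI[of _ "(Y, pcell n s (\<lambda>i. 1 / c i), X)"])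
qed

lemma iso_obj_iff:
  assumes s: "s permutes {1..n}" and t: "t permutes {1..n}" and X: "fst X = Pmat n s" and Y: "fst Y = Pmat n t"
  shows "iso_obj HH X Y \<longleftrightarrow> s = t"
proof
  assume "iso_obj HH X Y"
  then obtain f where "iso_mor HH X Y f" unfolding iso_obj_def by blast
  then obtain T where T: "inv_twocell n X Y T" unfolding iso_mor_def by (auto simp: H_hom)
  have "Pmat n t = Pmat n s"
  proof (intro ext)
    fix i j show "Pmat n t i j = Pmat n s i j"
    proof (cases "i \<in> {1..n} \<and> j \<in> {1..n}")
      case True thus ?thesis using inv_twocell_dims[OF T] X Y Pmat_le1 by auto
    next
      case False thus ?thesis by (auto simp: Pmat_def)
    qed
  qed
  thus "s = t" using Pmat_inj[OF s t] by simp
next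
  assume "s = t"
  hence "iso_mor HH X Y (X, pcell n s (\<lambda>_. 1), Y)" using iso_mor_pcell[OF s X, of Y "\<lambda>_. 1"] Y by simp
  thus "iso_obj HH X Y" unfolding iso_obj_def by blast
qed

lemma invm_pcell:
  assumes s: "s permutes {1..n}" and X: "fst X = Pmat n s" and Y: "fst Y = Pmat n s"
    and c: "\<And>i. i \<in> {1..n} \<Longrightarrow> c i \<noteq> 0"
  shows "invm HH X Y (X, pcell n s c, Y) = (Y, pcell n s (\<lambda>i. 1 / c i), X)"
  unfolding invm_def
proof (rule the_equality)
  have c': "\<And>i. i \<in> {1..n} \<Longrightarrow> 1 / c i \<noteq> 0" using c by simp
  have e1: "vcomp2 (pcell n s (\<lambda>i. 1 / c i)) (pcell n s c) = id2 n (fst X)"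
    unfolding vcomp2_pcell X id2_Pmat by (rule pcell_cong) (simp add: c)
  have e2: "vcomp2 (pcell n s c) (pcell n s (\<lambda>i. 1 / c i)) = id2 n (fst Y)"
    unfolding vcomp2_pcell Y id2_Pmat by (rule pcell_cong) (simp add: c)
  show "(Y, pcell n s (\<lambda>i. 1 / c i), X) \<in> tg_hom HH Y X \<and>
    tg_comp HH (Y, pcell n s (\<lambda>i. 1 / c i), X) (X, pcell n s c, Y) = tg_id HH X \<and>
    tg_comp HH (X, pcell n s c, Y) (Y, pcell n s (\<lambda>i. 1 / c i), X) = tg_id HH Y"
    using inv_twocell_pcellI[OF Y X c'] e1 e2 by (simp add: H_hom H_comp H_id)
next
  fix g assume g: "g \<in> tg_hom HH Y X \<and> tg_comp HH g (X, pcell n s c, Y) = tg_id HH X \<and>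
    tg_comp HH (X, pcell n s c, Y) g = tg_id HH Y"
  then obtain T where gT: "g = (Y, T, X)" and T: "inv_twocell n Y X T" by (auto simp: H_hom)
  have Te: "T = pcell n s (cvec n s T)" using inv_twocell_pcell[OF s Y X T] by simp
  have "vcomp2 T (pcell n s c) = id2 n (fst X)" using g gT by (simp add: H_comp H_id)
  hence "pcell n s (\<lambda>i. cvec n s T i * c i) = pcell n s (\<lambda>_. 1)"
    by (subst (asm) Te) (simp add: vcomp2_pcell X id2_Pmat)
  hence "\<forall>i\<in>{1..n}. cvec n s T i * c i = 1" by (simp add: pcell_eq_iff[OF s])
  hence "\<forall>i\<in>{1..n}. cvec n s T i = 1 / c i" using c by (simp add: field_simps)
  hence "T = pcell n s (\<lambda>i. 1 / c i)" using Te pcell_cong by metis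
  thus "g = (Y, pcell n s (\<lambda>i. 1 / c i), X)" using gT by simp
qed

end



lemma hcomp2_pcell:
  assumes s: "s permutes {1..n}" and t: "t permutes {1..n}"
    and gAt: "is_gauge n (Pmat n s) (snd At)" and gAt': "is_gauge n (Pmat n s) (snd At')"
    and A: "fst A = Pmat n t" and A': "fst A' = Pmat n t"
  shows "hcomp2 n At At' (pcell n s a) A A' (pcell n t b) = pcell n (s \<circ> t) (\<lambda>k. a k * b (pinv s k))"
proof (intro ext)
  fix k j
  show "hcomp2 n At At' (pcell n s a) A A' (pcell n t b) k j = pcell n (s \<circ> t) (\<lambda>k. a k * b (pinv s k)) k j"
  proof (cases "k \<in> {1..n} \<and> j \<in> {1..n}")
    case True
    hence k: "k \<in> {1..n}" and j: "j \<in> {1..n}" by auto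
    have tj: "t j \<in> {1..n}" using j perm_in[OF t] by simp
    have g1: "snd At' k (mvec n (fst A') (evec j)) = 1\<^sub>m (Pmat n s k (t j))"
      using A' mvec_Pmat_evec[OF t j] gauge_norm[OF gAt' k tj] by simp
    have g2: "snd At k (mvec n (fst A) (evec j)) = 1\<^sub>m (Pmat n s k (t j))"
      using A mvec_Pmat_evec[OF t j] gauge_norm[OF gAt k tj] by simp
    have ds: "dsum n (\<lambda>i. kron (pcell n s a k i) (pcell n t b i j)) = kron (pcell n s a k (t j)) (pcell n t b (t j) j)"
      by (rule dsum_single[OF tj]) (auto simp: pcell_def kron_zero_right)
    have pb: "pcell n t b (t j) j = mat 1 1 (\<lambda>_. b (t j))" using j tj by (simp add: pcell_def)
    show ?thesis
    proof (cases "k = s (t j)")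
      case True2: True
      have pa: "pcell n s a k (t j) = mat 1 1 (\<lambda>_. a k)" using k tj True2 by (simp add: pcell_def)
      have P1: "Pmat n s k (t j) = 1" using k tj True2 by (simp add: Pmat_def)
      have pi: "pinv s k = t j" using True2 perm_inv_eq[OF s] by simp
      have "hcomp2 n At At' (pcell n s a) A A' (pcell n t b) k j
          = 1\<^sub>m 1 * mat 1 1 (\<lambda>_. a k * b (t j)) * mat_inv (1\<^sub>m 1)"
        unfolding hcomp2_def using k j g1 g2 ds pa pb P1 by (simp add: kron11)
      also have "\<dots> = mat 1 1 (\<lambda>_. a k * b (t j))" by (simp add: mat_inv_one)
      finally show ?thesis using k j True2 pi by (simp add: pcell_def)
    next
      case False
      have pa: "pcell n s a k (t j) = 1\<^sub>m 0" using False by (simp add: pcell_def)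
      have P1: "Pmat n s k (t j) = 0" using False by (simp add: Pmat_def)
      have "hcomp2 n At At' (pcell n s a) A A' (pcell n t b) k j = 1\<^sub>m 0 * 1\<^sub>m 0 * mat_inv (1\<^sub>m 0)"
        unfolding hcomp2_def using k j g1 g2 ds pa P1 by (simp add: kron_zero_left)
      also have "\<dots> = 1\<^sub>m 0" by (simp add: mat_inv_one)
      finally show ?thesis using False by (simp add: pcell_def)
    qed
  next
    case False
    thus ?thesis unfolding hcomp2_def pcell_def by auto
  qed
qed

lemma gauge_E0: "is_gauge n (Pmat n s) (snd (E0 n s))"
  unfolding E0_def by (simp add: is_gauge_triv)

lemma hcomp2_E0:
  assumes s: "s permutes {1..n}" and t: "t permutes {1..n}"
  shows "hcomp2 n (E0 n s) (E0 n s) (pcell n s a) (E0 n t) (E0 n t) (pcell n t b) = pcell n (s \<circ> t) (\<lambda>k. a k * b (pinv s k))"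
  by (rule hcomp2_pcell[OF s t gauge_E0 gauge_E0]) simp_all

lemma G_obj: "tg_obj (Gsplit n) = {s. s permutes {1..n}}" by (simp add: Gsplit_def)
lemma G_hom: "tg_hom (Gsplit n) s t = (if s = t then {(s, l) | l. l \<in> cstar_vecs n} else {})" by (simp add: Gsplit_def)
lemma G_comp: "tg_comp (Gsplit n) (s, l') (t, l) = (s, \<lambda>i. l' i * l i)" by (simp add: Gsplit_def)
lemma G_id: "tg_id (Gsplit n) s = (s, \<lambda>i. 1)" by (simp add: Gsplit_def)
lemma G_tens: "tg_tens (Gsplit n) s t = s \<circ> t" by (simp add: Gsplit_def)
lemma G_tensm: "tg_tensm (Gsplit n) (s1, l1) (s2, l2) = (s1 \<circ> s2, \<lambda>i. l1 i * perm_vec s1 l2 i)" by (simp add: Gsplit_def)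
lemma G_unit: "tg_unit (Gsplit n) = id" by (simp add: Gsplit_def)
lemma G_assoc: "tg_assoc (Gsplit n) a b c = (a \<circ> b \<circ> c, \<lambda>i. 1)" by (simp add: Gsplit_def)
lemma G_lu: "tg_lu (Gsplit n) a = (a, \<lambda>i. 1)" by (simp add: Gsplit_def)
lemma G_ru: "tg_ru (Gsplit n) a = (a, \<lambda>i. 1)" by (simp add: Gsplit_def)

lemma cstar_nz: "l \<in> cstar_vecs n \<Longrightarrow> i \<in> {1..n} \<Longrightarrow> l i \<noteq> 0"
  unfolding cstar_vecs_def by auto

lemma E2_pcell: "E2 n s t = (E0 n (s \<circ> t), pcell n (s \<circ> t) (\<lambda>_. 1), E0 n (s \<circ> t))"
  unfolding E2_def by (simp add: id2_Pmat)

lemma Eu_pcell: "Eu n = (E0 n id, pcell n id (\<lambda>_. 1), E0 n id)"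
  unfolding Eu_def by (simp add: id1_E0 Pmat_id[symmetric] id2_Pmat)

context
  fixes n :: nat and Pm :: "(nat \<Rightarrow> nat) \<Rightarrow> (nat \<Rightarrow> nat \<Rightarrow> nat) \<Rightarrow> (nat \<Rightarrow> nat) \<Rightarrow> complex mat"
  assumes adm: "admissible_P n Pm"
begin

lemma E_mon_functor: "mon_functor (Gsplit n) (EquivMat n Pm) (E0 n) (E1 n) (E2 n) (Eu n)"
  unfolding mon_functor_def
proof (intro conjI ballI)
  show "E0 n A \<in> tg_obj (EquivMat n Pm)" if "A \<in> tg_obj (Gsplit n)" for A
    using that E0_obj by (simp add: G_obj)
next
  fix A B f assume A: "A \<in> tg_obj (Gsplit n)" and B: "B \<in> tg_obj (Gsplit n)" and f: "f \<in> tg_hom (Gsplit n) A B"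
  then obtain l where "B = A" "f = (A, l)" "l \<in> cstar_vecs n" by (auto simp: G_hom split: if_splits)
  thus "E1 n f \<in> tg_hom (EquivMat n Pm) (E0 n A) (E0 n B)"
    using inv_twocell_pcellI[of "E0 n A" n A "E0 n A" l] cstar_nz by (simp add: E1_pcell H_hom)
next
  fix A B C f g assume A: "A \<in> tg_obj (Gsplit n)" and B: "B \<in> tg_obj (Gsplit n)" and C: "C \<in> tg_obj (Gsplit n)"
    and f: "f \<in> tg_hom (Gsplit n) A B" and g: "g \<in> tg_hom (Gsplit n) B C"
  then obtain l l' where "B = A" "C = A" "f = (A, l)" "g = (A, l')" by (auto simp: G_hom split: if_splits)
  thus "E1 n (tg_comp (Gsplit n) g f) = tg_comp (EquivMat n Pm) (E1 n g) (E1 n f)"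
    by (simp add: G_comp E1_pcell H_comp vcomp2_pcell)
next
  fix A assume "A \<in> tg_obj (Gsplit n)"
  thus "E1 n (tg_id (Gsplit n) A) = tg_id (EquivMat n Pm) (E0 n A)"
    by (simp add: G_id E1_pcell H_id id2_Pmat)
next
  fix A B assume A: "A \<in> tg_obj (Gsplit n)" and B: "B \<in> tg_obj (Gsplit n)"
  hence a: "A permutes {1..n}" and b: "B permutes {1..n}" by (auto simp: G_obj)
  have ab: "A \<circ> B permutes {1..n}" by (rule permutes_compose[OF b a])
  show "iso_mor (EquivMat n Pm) (tg_tens (EquivMat n Pm) (E0 n A) (E0 n B)) (E0 n (tg_tens (Gsplit n) A B)) (E2 n A B)"
    unfolding H_tens G_tens comp1_E0[OF a b adm] E2_pcell
    by (rule iso_mor_pcell[OF ab]) simp_all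
next
  show "iso_mor (EquivMat n Pm) (tg_unit (EquivMat n Pm)) (E0 n (tg_unit (Gsplit n))) (Eu n)"
    unfolding H_unit G_unit Eu_pcell id1_E0
    by (rule iso_mor_pcell) (simp_all add: permutes_id)
next
  fix A A' B B' f g
  assume A: "A \<in> tg_obj (Gsplit n)" and A': "A' \<in> tg_obj (Gsplit n)" and B: "B \<in> tg_obj (Gsplit n)"
    and B': "B' \<in> tg_obj (Gsplit n)" and f: "f \<in> tg_hom (Gsplit n) A A'" and g: "g \<in> tg_hom (Gsplit n) B B'"
  then obtain l1 l2 where e: "A' = A" "B' = B" "f = (A, l1)" "g = (B, l2)" by (auto simp: G_hom split: if_splits)
  have a: "A permutes {1..n}" and b: "B permutes {1..n}" using A B by (auto simp: G_obj)
  show "tg_comp (EquivMat n Pm) (E2 n A' B') (tg_tensm (EquivMat n Pm) (E1 n f) (E1 n g)) =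
        tg_comp (EquivMat n Pm) (E1 n (tg_tensm (Gsplit n) f g)) (E2 n A B)"
    unfolding e by (simp add: E1_pcell E2_pcell H_tensm H_comp G_tensm hcomp2_E0[OF a b] comp1_E0[OF a b adm]
        vcomp2_pcell perm_vec_def)
next
  fix A B C assume A: "A \<in> tg_obj (Gsplit n)" and B: "B \<in> tg_obj (Gsplit n)" and C: "C \<in> tg_obj (Gsplit n)"
  hence a: "A permutes {1..n}" and b: "B permutes {1..n}" and c: "C permutes {1..n}" by (auto simp: G_obj)
  have ab: "A \<circ> B permutes {1..n}" by (rule permutes_compose[OF b a])
  have bc: "B \<circ> C permutes {1..n}" by (rule permutes_compose[OF c b])
  have abc: "A \<circ> B \<circ> C = A \<circ> (B \<circ> C)" by (simp add: o_assoc)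
  show "tg_comp (EquivMat n Pm) (E1 n (tg_assoc (Gsplit n) A B C))
          (tg_comp (EquivMat n Pm) (E2 n (tg_tens (Gsplit n) A B) C) (tg_tensm (EquivMat n Pm) (E2 n A B) (tg_id (EquivMat n Pm) (E0 n C)))) =
        tg_comp (EquivMat n Pm) (E2 n A (tg_tens (Gsplit n) B C))
          (tg_comp (EquivMat n Pm) (tg_tensm (EquivMat n Pm) (tg_id (EquivMat n Pm) (E0 n A)) (E2 n B C)) (tg_assoc (EquivMat n Pm) (E0 n A) (E0 n B) (E0 n C)))"
    by (simp add: E1_pcell E2_pcell H_tensm H_comp H_id H_assoc G_assoc G_tens id2_Pmat
        comp1_E0[OF a b adm] comp1_E0[OF ab c adm] comp1_E0[OF b c adm] comp1_E0[OF a bc adm]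
        hcomp2_E0[OF ab c] hcomp2_E0[OF a bc] vcomp2_pcell abc)
next
  fix A assume A: "A \<in> tg_obj (Gsplit n)"
  hence a: "A permutes {1..n}" by (simp add: G_obj)
  have i: "id permutes {1..n}" by (rule permutes_id)
  show "tg_comp (EquivMat n Pm) (E1 n (tg_lu (Gsplit n) A))
          (tg_comp (EquivMat n Pm) (E2 n (tg_unit (Gsplit n)) A) (tg_tensm (EquivMat n Pm) (Eu n) (tg_id (EquivMat n Pm) (E0 n A)))) =
        tg_lu (EquivMat n Pm) (E0 n A)"
    by (simp add: E1_pcell E2_pcell Eu_pcell H_tensm H_comp H_id H_lu G_lu G_unit id2_Pmat id1_E0
        comp1_E0[OF i a adm] hcomp2_E0[OF i a] vcomp2_pcell)
next
  fix A assume A: "A \<in> tg_obj (Gsplit n)"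
  hence a: "A permutes {1..n}" by (simp add: G_obj)
  have i: "id permutes {1..n}" by (rule permutes_id)
  show "tg_comp (EquivMat n Pm) (E1 n (tg_ru (Gsplit n) A))
          (tg_comp (EquivMat n Pm) (E2 n A (tg_unit (Gsplit n))) (tg_tensm (EquivMat n Pm) (tg_id (EquivMat n Pm) (E0 n A)) (Eu n))) =
        tg_ru (EquivMat n Pm) (E0 n A)"
    by (simp add: E1_pcell E2_pcell Eu_pcell H_tensm H_comp H_id H_ru G_ru G_unit id2_Pmat id1_E0
        comp1_E0[OF a i adm] hcomp2_E0[OF a i] vcomp2_pcell)
qed

end



lemma inv_twocell_perm_eq:
  assumes s: "s permutes {1..n}" and t: "t permutes {1..n}" and X: "fst X = Pmat n s" and Y: "fst Y = Pmat n t"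
    and T: "inv_twocell n X Y T"
  shows "s = t"
proof -
  have "Pmat n t = Pmat n s"
  proof (intro ext)
    fix i j show "Pmat n t i j = Pmat n s i j"
    proof (cases "i \<in> {1..n} \<and> j \<in> {1..n}")
      case True thus ?thesis using inv_twocell_dims[OF T] X Y Pmat_le1 by auto
    next
      case False thus ?thesis by (auto simp: Pmat_def)
    qed
  qed
  thus "s = t" using Pmat_inj[OF s t] by simp
qed

lemma cvec_pcell: "s permutes {1..n} \<Longrightarrow> cvec n s (pcell n s c) = (\<lambda>i. if i \<in> {1..n} then c i else 1)"
  unfolding cvec_def pcell_def
  by (auto simp: fun_eq_iff perm_inv_in perm_inv_eq[symmetric])

lemma cstar_norm: "c \<in> cstar_vecs n \<Longrightarrow> (\<lambda>i. if i \<in> {1..n} then c i else 1) = c"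
  unfolding cstar_vecs_def by (auto simp: fun_eq_iff)

lemma cstar_eq: "c \<in> cstar_vecs n \<Longrightarrow> d \<in> cstar_vecs n \<Longrightarrow> (\<forall>i\<in>{1..n}. c i = d i) \<Longrightarrow> c = d"
  unfolding cstar_vecs_def by (auto simp: fun_eq_iff)

context
  fixes n :: nat and Pm :: "(nat \<Rightarrow> nat) \<Rightarrow> (nat \<Rightarrow> nat \<Rightarrow> nat) \<Rightarrow> (nat \<Rightarrow> nat) \<Rightarrow> complex mat"
  assumes adm: "admissible_P n Pm"
begin

lemma E_mon_equiv: "mon_equiv (Gsplit n) (EquivMat n Pm) (E0 n) (E1 n) (E2 n) (Eu n)"
  unfolding mon_equiv_def
proof (intro conjI ballI impI)
  show "mon_functor (Gsplit n) (EquivMat n Pm) (E0 n) (E1 n) (E2 n) (Eu n)" by (rule E_mon_functor[OF adm])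
next
  fix B assume "B \<in> tg_obj (EquivMat n Pm)"
  then obtain s where s: "s permutes {1..n}" and fB: "fst B = Pmat n s" using obj_iff by blast
  have "iso_obj (EquivMat n Pm) (E0 n s) B" using iso_obj_iff[OF s s, of "E0 n s" B] fB by simp
  thus "\<exists>A\<in>tg_obj (Gsplit n). iso_obj (EquivMat n Pm) (E0 n A) B" using s by (auto simp: G_obj)
next
  fix A B g assume A: "A \<in> tg_obj (Gsplit n)" and B: "B \<in> tg_obj (Gsplit n)"
    and g: "g \<in> tg_hom (EquivMat n Pm) (E0 n A) (E0 n B)"
  have a: "A permutes {1..n}" and b: "B permutes {1..n}" using A B by (auto simp: G_obj)
  obtain T where gT: "g = (E0 n A, T, E0 n B)" and T: "inv_twocell n (E0 n A) (E0 n B) T"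
    using g by (auto simp: H_hom)
  have AB: "A = B" using inv_twocell_perm_eq[OF a b _ _ T] by simp
  have Te: "T = pcell n A (cvec n A T)" "cvec n A T \<in> cstar_vecs n"
    using inv_twocell_pcell[OF a _ _ T] AB by auto
  show "\<exists>f\<in>tg_hom (Gsplit n) A B. E1 n f = g"
    using Te AB gT by (auto simp: G_hom E1_pcell intro!: bexI[of _ "(A, cvec n A T)"])
next
  fix A B f f' assume A: "A \<in> tg_obj (Gsplit n)" and B: "B \<in> tg_obj (Gsplit n)"
    and f: "f \<in> tg_hom (Gsplit n) A B" and f': "f' \<in> tg_hom (Gsplit n) A B" and eq: "E1 n f = E1 n f'"
  have a: "A permutes {1..n}" using A by (auto simp: G_obj)
  obtain l l' where e: "f = (A, l)" "f' = (A, l')" "l \<in> cstar_vecs n" "l' \<in> cstar_vecs n"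
    using f f' by (auto simp: G_hom split: if_splits)
  have "pcell n A l = pcell n A l'" using eq e by (simp add: E1_pcell)
  hence "\<forall>i\<in>{1..n}. l i = l' i" by (simp add: pcell_eq_iff[OF a])
  thus "f = f'" using e cstar_eq by metis
qed

section \<open>pi_0\<close>

definition cls :: "(nat \<Rightarrow> nat) \<Rightarrow> onemor set" where
  "cls s = {A \<in> tg_obj (EquivMat n Pm). fst A = Pmat n s}"

lemma isoclass_cls:
  assumes A: "A \<in> tg_obj (EquivMat n Pm)" and s: "s permutes {1..n}" and fA: "fst A = Pmat n s"
  shows "isoclass (EquivMat n Pm) A = cls s"
proof -
  have "B \<in> isoclass (EquivMat n Pm) A \<longleftrightarrow> B \<in> cls s" for B
  proof -
    have "B \<in> isoclass (EquivMat n Pm) A \<longleftrightarrow> B \<in> tg_obj (EquivMat n Pm) \<and> iso_obj (EquivMat n Pm) A B"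
      unfolding isoclass_def isorel_def using A by auto
    also have "\<dots> \<longleftrightarrow> B \<in> cls s"
    proof
      assume "B \<in> tg_obj (EquivMat n Pm) \<and> iso_obj (EquivMat n Pm) A B"
      moreover then obtain t where "t permutes {1..n}" "fst B = Pmat n t" using obj_iff by blast
      ultimately show "B \<in> cls s" using iso_obj_iff[OF s _ fA] unfolding cls_def by auto
    next
      assume "B \<in> cls s"
      thus "B \<in> tg_obj (EquivMat n Pm) \<and> iso_obj (EquivMat n Pm) A B"
        using iso_obj_iff[OF s s fA] unfolding cls_def by auto
    qed
    finally show ?thesis .
  qed
  thus ?thesis by blast
qed

lemma E0_cls: "s permutes {1..n} \<Longrightarrow> E0 n s \<in> cls s"
  unfolding cls_def using E0_obj by simp

lemma cls_inj: "s permutes {1..n} \<Longrightarrow> t permutes {1..n} \<Longrightarrow> cls s = cls t \<Longrightarrow> s = t"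
  using E0_cls[of s] unfolding cls_def by (auto intro: Pmat_inj)

lemma carrier_pi0: "carrier (pi0 (EquivMat n Pm)) = {cls s | s. s permutes {1..n}}"
proof -
  have "carrier (pi0 (EquivMat n Pm)) = (\<Union>A\<in>tg_obj (EquivMat n Pm). {isoclass (EquivMat n Pm) A})"
    unfolding pi0_def quotient_def isoclass_def by simp
  also have "\<dots> = {cls s | s. s permutes {1..n}}"
  proof (intro equalityI subsetI)
    fix X assume "X \<in> (\<Union>A\<in>tg_obj (EquivMat n Pm). {isoclass (EquivMat n Pm) A})"
    then obtain A where A: "A \<in> tg_obj (EquivMat n Pm)" and X: "X = isoclass (EquivMat n Pm) A" by blast
    then obtain s where "s permutes {1..n}" "fst A = Pmat n s" using obj_iff by blast
    thus "X \<in> {cls s | s. s permutes {1..n}}" using isoclass_cls[OF A] X by blast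
  next
    fix X assume "X \<in> {cls s | s. s permutes {1..n}}"
    then obtain s where s: "s permutes {1..n}" and X: "X = cls s" by blast
    have "X = isoclass (EquivMat n Pm) (E0 n s)" using isoclass_cls[OF E0_obj[OF s] s] X by simp
    thus "X \<in> (\<Union>A\<in>tg_obj (EquivMat n Pm). {isoclass (EquivMat n Pm) A})" using E0_obj[OF s] by blast
  qed
  finally show ?thesis .
qed

lemma some_cls: "s permutes {1..n} \<Longrightarrow> (SOME A. A \<in> cls s) \<in> cls s"
  using E0_cls by (metis someI_ex)

lemma cls_comp1:
  assumes s: "s permutes {1..n}" and t: "t permutes {1..n}" and A: "A \<in> cls s" and B: "B \<in> cls t"
  shows "comp1 n Pm A B \<in> cls (s \<circ> t)"
proof -
  have A': "is_onemor n A" "fst A = Pmat n s" and B': "is_onemor n B" "fst B = Pmat n t"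
    using A B obj_iff unfolding cls_def by auto
  note c = comp1_onemor[OF s t adm A' B']
  have st: "s \<circ> t permutes {1..n}" by (rule permutes_compose[OF t s])
  show ?thesis unfolding cls_def using c obj_iff st by auto
qed

lemma mult_pi0:
  assumes s: "s permutes {1..n}" and t: "t permutes {1..n}"
  shows "cls s \<otimes>\<^bsub>pi0 (EquivMat n Pm)\<^esub> cls t = cls (s \<circ> t)"
proof -
  let ?A = "SOME A. A \<in> cls s" and ?B = "SOME B. B \<in> cls t"
  have st: "s \<circ> t permutes {1..n}" by (rule permutes_compose[OF t s])
  have c: "comp1 n Pm ?A ?B \<in> cls (s \<circ> t)" by (rule cls_comp1[OF s t some_cls[OF s] some_cls[OF t]])
  have "cls s \<otimes>\<^bsub>pi0 (EquivMat n Pm)\<^esub> cls t = isoclass (EquivMat n Pm) (comp1 n Pm ?A ?B)"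
    unfolding pi0_def by (simp add: H_tens)
  also have "\<dots> = cls (s \<circ> t)" using c isoclass_cls[OF _ st] unfolding cls_def by auto
  finally show ?thesis .
qed

lemma one_pi0: "\<one>\<^bsub>pi0 (EquivMat n Pm)\<^esub> = cls id"
  unfolding pi0_def using isoclass_cls[OF E0_obj[OF permutes_id] permutes_id]
  by (simp add: H_unit id1_E0)

definition alpha :: "onemor set \<Rightarrow> (nat \<Rightarrow> nat)" where
  "alpha X = (SOME s. s permutes {1..n} \<and> X = cls s)"

lemma alpha_cls: "s permutes {1..n} \<Longrightarrow> alpha (cls s) = s"
proof -
  assume s: "s permutes {1..n}"
  have "alpha (cls s) permutes {1..n} \<and> cls s = cls (alpha (cls s))"
    unfolding alpha_def by (rule someI[of _ s]) (simp add: s)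
  thus ?thesis using cls_inj[OF s] by metis
qed

lemma alpha_iso: "alpha \<in> iso (pi0 (EquivMat n Pm)) (sym_group n)"
  unfolding iso_def hom_def
proof (intro CollectI conjI)
  show "alpha \<in> carrier (pi0 (EquivMat n Pm)) \<rightarrow> carrier (sym_group n)"
    by (auto simp: carrier_pi0 sym_group_carrier alpha_cls)
  show "\<forall>x\<in>carrier (pi0 (EquivMat n Pm)). \<forall>y\<in>carrier (pi0 (EquivMat n Pm)).
          alpha (x \<otimes>\<^bsub>pi0 (EquivMat n Pm)\<^esub> y) = alpha x \<otimes>\<^bsub>sym_group n\<^esub> alpha y"
    by (auto simp: carrier_pi0 sym_group_mult alpha_cls mult_pi0 permutes_compose)
  show "bij_betw alpha (carrier (pi0 (EquivMat n Pm))) (carrier (sym_group n))"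
    unfolding bij_betw_def
  proof
    show "inj_on alpha (carrier (pi0 (EquivMat n Pm)))"
      by (auto simp: carrier_pi0 alpha_cls inj_on_def)
    show "alpha ` carrier (pi0 (EquivMat n Pm)) = carrier (sym_group n)"
    proof (intro equalityI subsetI)
      fix x assume "x \<in> alpha ` carrier (pi0 (EquivMat n Pm))"
      thus "x \<in> carrier (sym_group n)" by (auto simp: carrier_pi0 sym_group_carrier alpha_cls)
    next
      fix x assume "x \<in> carrier (sym_group n)"
      hence x: "x permutes {1..n}" by (simp add: sym_group_carrier)
      hence "cls x \<in> carrier (pi0 (EquivMat n Pm))" by (auto simp: carrier_pi0)
      moreover have "x = alpha (cls x)" using alpha_cls[OF x] by simp
      ultimately show "x \<in> alpha ` carrier (pi0 (EquivMat n Pm))" by blast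
    qed
  qed
qed

section \<open>pi_1\<close>

definition beta :: "onemor \<times> twocell \<times> onemor \<Rightarrow> (nat \<Rightarrow> complex)" where
  "beta u = cvec n id (fst (snd u))"

lemma carrier_pi1: "u \<in> carrier (pi1 (EquivMat n Pm)) \<longleftrightarrow> (\<exists>c \<in> cstar_vecs n. u = (id1 n, pcell n id c, id1 n))"
proof
  assume "u \<in> carrier (pi1 (EquivMat n Pm))"
  then obtain T where u: "u = (id1 n, T, id1 n)" and T: "inv_twocell n (id1 n) (id1 n) T"
    unfolding pi1_def by (auto simp: H_hom H_unit)
  have f: "fst (id1 n) = Pmat n id" by (simp add: id1_E0)
  show "\<exists>c \<in> cstar_vecs n. u = (id1 n, pcell n id c, id1 n)"
    using inv_twocell_pcell[OF permutes_id f f T] u by blast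
next
  assume "\<exists>c \<in> cstar_vecs n. u = (id1 n, pcell n id c, id1 n)"
  then obtain c where c: "c \<in> cstar_vecs n" and u: "u = (id1 n, pcell n id c, id1 n)" by blast
  have f: "fst (id1 n) = Pmat n id" by (simp add: id1_E0)
  show "u \<in> carrier (pi1 (EquivMat n Pm))"
    unfolding pi1_def using inv_twocell_pcellI[OF f f, of c] c u cstar_nz by (auto simp: H_hom H_unit)
qed

lemma beta_pcell: "c \<in> cstar_vecs n \<Longrightarrow> beta (id1 n, pcell n id c, id1 n) = c"
  unfolding beta_def by (simp add: cvec_pcell[OF permutes_id] cstar_norm)

lemma mult_pi1: "(X, T', Y) \<otimes>\<^bsub>pi1 (EquivMat n Pm)\<^esub> (X', T, Y') = (X', vcomp2 T' T, Y)"
  unfolding pi1_def by (simp add: H_comp)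

lemma one_pi1: "\<one>\<^bsub>pi1 (EquivMat n Pm)\<^esub> = (id1 n, pcell n id (\<lambda>_. 1), id1 n)"
  unfolding pi1_def by (simp add: H_id H_unit id1_E0 id2_Pmat)

lemma cstar_mult: "c \<in> cstar_vecs n \<Longrightarrow> d \<in> cstar_vecs n \<Longrightarrow> (\<lambda>i. c i * d i) \<in> cstar_vecs n"
  unfolding cstar_vecs_def by auto

lemma beta_iso: "beta \<in> iso (pi1 (EquivMat n Pm)) (cstar_group n)"
  unfolding iso_def hom_def
proof (intro CollectI conjI)
  show "beta \<in> carrier (pi1 (EquivMat n Pm)) \<rightarrow> carrier (cstar_group n)"
    by (auto simp: carrier_pi1 cstar_group_def beta_pcell)
  show "\<forall>x\<in>carrier (pi1 (EquivMat n Pm)). \<forall>y\<in>carrier (pi1 (EquivMat n Pm)).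
          beta (x \<otimes>\<^bsub>pi1 (EquivMat n Pm)\<^esub> y) = beta x \<otimes>\<^bsub>cstar_group n\<^esub> beta y"
  proof (intro ballI)
    fix x y assume x: "x \<in> carrier (pi1 (EquivMat n Pm))" and y: "y \<in> carrier (pi1 (EquivMat n Pm))"
    obtain c where c: "c \<in> cstar_vecs n" "x = (id1 n, pcell n id c, id1 n)" using x carrier_pi1 by blast
    obtain d where d: "d \<in> cstar_vecs n" "y = (id1 n, pcell n id d, id1 n)" using y carrier_pi1 by blast
    have "x \<otimes>\<^bsub>pi1 (EquivMat n Pm)\<^esub> y = (id1 n, pcell n id (\<lambda>i. c i * d i), id1 n)"
      using c d by (simp add: mult_pi1 vcomp2_pcell)
    thus "beta (x \<otimes>\<^bsub>pi1 (EquivMat n Pm)\<^esub> y) = beta x \<otimes>\<^bsub>cstar_group n\<^esub> beta y"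
      using c d by (simp add: beta_pcell cstar_mult cstar_group_def)
  qed
  show "bij_betw beta (carrier (pi1 (EquivMat n Pm))) (carrier (cstar_group n))"
    unfolding bij_betw_def
  proof
    show "inj_on beta (carrier (pi1 (EquivMat n Pm)))"
    proof (rule inj_onI)
      fix x y assume x: "x \<in> carrier (pi1 (EquivMat n Pm))" and y: "y \<in> carrier (pi1 (EquivMat n Pm))"
        and eq: "beta x = beta y"
      obtain c where c: "c \<in> cstar_vecs n" "x = (id1 n, pcell n id c, id1 n)" using x carrier_pi1 by blast
      obtain d where d: "d \<in> cstar_vecs n" "y = (id1 n, pcell n id d, id1 n)" using y carrier_pi1 by blast
      have "c = d" using eq c d beta_pcell by metis
      thus "x = y" using c d by simp
    qed
    show "beta ` carrier (pi1 (EquivMat n Pm)) = carrier (cstar_group n)"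
    proof (intro equalityI subsetI)
      fix x assume "x \<in> beta ` carrier (pi1 (EquivMat n Pm))"
      thus "x \<in> carrier (cstar_group n)" by (auto simp: carrier_pi1 beta_pcell cstar_group_def)
    next
      fix x assume "x \<in> carrier (cstar_group n)"
      hence x: "x \<in> cstar_vecs n" by (simp add: cstar_group_def)
      hence "(id1 n, pcell n id x, id1 n) \<in> carrier (pi1 (EquivMat n Pm))" by (auto simp: carrier_pi1)
      moreover have "beta (id1 n, pcell n id x, id1 n) = x" by (rule beta_pcell[OF x])
      ultimately show "x \<in> beta ` carrier (pi1 (EquivMat n Pm))" by (metis image_eqI)
    qed
  qed
qed

section \<open>The action\<close>

lemma gauge_of_obj: "A \<in> tg_obj (EquivMat n Pm) \<Longrightarrow> fst A = Pmat n s \<Longrightarrow> is_gauge n (Pmat n s) (snd A)"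
  using obj_iff unfolding is_onemor_def by auto

lemma del_pcell:
  assumes A: "A \<in> tg_obj (EquivMat n Pm)" and s: "s permutes {1..n}" and fA: "fst A = Pmat n s"
  shows "del (EquivMat n Pm) A (id1 n, pcell n id c, id1 n) = (A, pcell n s (\<lambda>k. c (pinv s k)), A)"
proof -
  have g: "is_gauge n (Pmat n s) (snd A)" by (rule gauge_of_obj[OF A fA])
  have i: "id permutes {1..n}" by (rule permutes_id)
  have f1: "fst (comp1 n Pm A (E0 n id)) = Pmat n s" using fA by (simp add: mmul_Pmat[OF s i])
  have inv: "invm (EquivMat n Pm) (comp1 n Pm A (E0 n id)) A (comp1 n Pm A (E0 n id), pcell n s (\<lambda>_. 1), A)
           = (A, pcell n s (\<lambda>i. 1 / 1), comp1 n Pm A (E0 n id))"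
    by (rule invm_pcell[OF s f1 fA]) simp
  have hc: "hcomp2 n A A (pcell n s (\<lambda>_. 1)) (E0 n id) (E0 n id) (pcell n id c) = pcell n (s \<circ> id) (\<lambda>k. 1 * c (pinv s k))"
    by (rule hcomp2_pcell[OF s i g g]) simp_all
  show ?thesis
    unfolding del_def
    by (simp add: H_ru H_tens H_unit H_id H_tensm H_comp id1_E0 fA id2_Pmat inv hc vcomp2_pcell)
qed

lemma gam_pcell:
  assumes A: "A \<in> tg_obj (EquivMat n Pm)" and s: "s permutes {1..n}" and fA: "fst A = Pmat n s"
  shows "gam (EquivMat n Pm) A (id1 n, pcell n id d, id1 n) = (A, pcell n s d, A)"
proof -
  have g: "is_gauge n (Pmat n s) (snd A)" by (rule gauge_of_obj[OF A fA])
  have i: "id permutes {1..n}" by (rule permutes_id)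
  have f1: "fst (comp1 n Pm (E0 n id) A) = Pmat n s" using fA by (simp add: mmul_Pmat[OF i s])
  have inv: "invm (EquivMat n Pm) (comp1 n Pm (E0 n id) A) A (comp1 n Pm (E0 n id) A, pcell n s (\<lambda>_. 1), A)
           = (A, pcell n s (\<lambda>i. 1 / 1), comp1 n Pm (E0 n id) A)"
    by (rule invm_pcell[OF s f1 fA]) simp
  have hc: "hcomp2 n (E0 n id) (E0 n id) (pcell n id d) A A (pcell n s (\<lambda>_. 1)) = pcell n (id \<circ> s) (\<lambda>k. d k * 1)"
    using hcomp2_pcell[OF i s gauge_E0 gauge_E0 fA fA, of d "\<lambda>_. 1"] by simp
  show ?thesis
    unfolding gam_def
    by (simp add: H_lu H_tens H_unit H_id H_tensm H_comp id1_E0 fA id2_Pmat inv hc vcomp2_pcell)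
qed

lemma gam_inv_pcell:
  assumes A: "A \<in> tg_obj (EquivMat n Pm)" and s: "s permutes {1..n}" and fA: "fst A = Pmat n s"
    and w: "w \<in> cstar_vecs n"
  shows "gam_inv (EquivMat n Pm) A (A, pcell n s w, A) = (id1 n, pcell n id w, id1 n)"
  unfolding gam_inv_def
proof (rule the_equality)
  have "(id1 n, pcell n id w, id1 n) \<in> carrier (pi1 (EquivMat n Pm))" using w by (auto simp: carrier_pi1)
  thus "(id1 n, pcell n id w, id1 n) \<in> tg_hom (EquivMat n Pm) (tg_unit (EquivMat n Pm)) (tg_unit (EquivMat n Pm)) \<and>
    gam (EquivMat n Pm) A (id1 n, pcell n id w, id1 n) = (A, pcell n s w, A)"
    using gam_pcell[OF A s fA] by (simp add: pi1_def)
next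
  fix u assume u: "u \<in> tg_hom (EquivMat n Pm) (tg_unit (EquivMat n Pm)) (tg_unit (EquivMat n Pm)) \<and>
    gam (EquivMat n Pm) A u = (A, pcell n s w, A)"
  then obtain d where d: "d \<in> cstar_vecs n" and ud: "u = (id1 n, pcell n id d, id1 n)"
    using carrier_pi1 unfolding pi1_def by auto
  have "pcell n s d = pcell n s w" using u ud gam_pcell[OF A s fA] by simp
  hence "\<forall>i\<in>{1..n}. d i = w i" by (simp add: pcell_eq_iff[OF s])
  hence "d = w" using cstar_eq d w by blast
  thus "u = (id1 n, pcell n id w, id1 n)" using ud by simp
qed

lemma perm_vec_cstar: "s permutes {1..n} \<Longrightarrow> c \<in> cstar_vecs n \<Longrightarrow> perm_vec s c \<in> cstar_vecs n"
  unfolding perm_vec_def cstar_vecs_def using perm_inv_in[of s n] by auto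

lemma act_pcell:
  assumes A: "A \<in> tg_obj (EquivMat n Pm)" and s: "s permutes {1..n}" and fA: "fst A = Pmat n s"
    and c: "c \<in> cstar_vecs n"
  shows "act (EquivMat n Pm) A (id1 n, pcell n id c, id1 n) = (id1 n, pcell n id (perm_vec s c), id1 n)"
  unfolding act_def del_pcell[OF A s fA]
  using gam_inv_pcell[OF A s fA perm_vec_cstar[OF s c]] by (simp add: perm_vec_def)

lemma action_thm:
  assumes A: "A \<in> tg_obj (EquivMat n Pm)" and u: "u \<in> carrier (pi1 (EquivMat n Pm))"
  shows "beta (act (EquivMat n Pm) A u) = perm_vec (alpha (isoclass (EquivMat n Pm) A)) (beta u)"
proof -
  obtain s where s: "s permutes {1..n}" and fA: "fst A = Pmat n s" using A obj_iff by blast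
  obtain c where c: "c \<in> cstar_vecs n" and uc: "u = (id1 n, pcell n id c, id1 n)" using u carrier_pi1 by blast
  have "alpha (isoclass (EquivMat n Pm) A) = s" using isoclass_cls[OF A s fA] alpha_cls[OF s] by simp
  thus ?thesis using act_pcell[OF A s fA c] uc beta_pcell[OF c] beta_pcell[OF perm_vec_cstar[OF s c]] by simp
qed

end



context
  fixes n :: nat and Pm :: "(nat \<Rightarrow> nat) \<Rightarrow> (nat \<Rightarrow> nat \<Rightarrow> nat) \<Rightarrow> (nat \<Rightarrow> nat) \<Rightarrow> complex mat"
  assumes adm: "admissible_P n Pm"
begin

lemma inv_pi1:
  assumes e: "e \<in> cstar_vecs n"
  shows "inv\<^bsub>pi1 (EquivMat n Pm)\<^esub> (id1 n, pcell n id e, id1 n) = (id1 n, pcell n id (\<lambda>i. 1 / e i), id1 n)"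
  unfolding m_inv_def
proof (rule the_equality)
  have e': "(\<lambda>i. 1 / e i) \<in> cstar_vecs n" using e unfolding cstar_vecs_def by auto
  have c: "(id1 n, pcell n id (\<lambda>i. 1 / e i), id1 n) \<in> carrier (pi1 (EquivMat n Pm))"
    using e' carrier_pi1[OF adm] by blast
  have f1: "pcell n id (\<lambda>i. e i * (1 / e i)) = pcell n id (\<lambda>_. 1)"
    by (rule pcell_cong) (use e cstar_nz in auto)
  have f2: "pcell n id (\<lambda>i. (1 / e i) * e i) = pcell n id (\<lambda>_. 1)"
    by (rule pcell_cong) (use e cstar_nz in auto)
  have m1: "(id1 n, pcell n id e, id1 n) \<otimes>\<^bsub>pi1 (EquivMat n Pm)\<^esub> (id1 n, pcell n id (\<lambda>i. 1 / e i), id1 n) = \<one>\<^bsub>pi1 (EquivMat n Pm)\<^esub>"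
    by (simp only: mult_pi1[OF adm] vcomp2_pcell one_pi1[OF adm] f1)
  have m2: "(id1 n, pcell n id (\<lambda>i. 1 / e i), id1 n) \<otimes>\<^bsub>pi1 (EquivMat n Pm)\<^esub> (id1 n, pcell n id e, id1 n) = \<one>\<^bsub>pi1 (EquivMat n Pm)\<^esub>"
    by (simp only: mult_pi1[OF adm] vcomp2_pcell one_pi1[OF adm] f2)
  show "(id1 n, pcell n id (\<lambda>i. 1 / e i), id1 n) \<in> carrier (pi1 (EquivMat n Pm)) \<and>
    (id1 n, pcell n id e, id1 n) \<otimes>\<^bsub>pi1 (EquivMat n Pm)\<^esub> (id1 n, pcell n id (\<lambda>i. 1 / e i), id1 n) = \<one>\<^bsub>pi1 (EquivMat n Pm)\<^esub> \<and>
    (id1 n, pcell n id (\<lambda>i. 1 / e i), id1 n) \<otimes>\<^bsub>pi1 (EquivMat n Pm)\<^esub> (id1 n, pcell n id e, id1 n) = \<one>\<^bsub>pi1 (EquivMat n Pm)\<^esub>"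
    using c m1 m2 by blast
next
  fix y assume y: "y \<in> carrier (pi1 (EquivMat n Pm)) \<and>
    (id1 n, pcell n id e, id1 n) \<otimes>\<^bsub>pi1 (EquivMat n Pm)\<^esub> y = \<one>\<^bsub>pi1 (EquivMat n Pm)\<^esub> \<and>
    y \<otimes>\<^bsub>pi1 (EquivMat n Pm)\<^esub> (id1 n, pcell n id e, id1 n) = \<one>\<^bsub>pi1 (EquivMat n Pm)\<^esub>"
  then obtain d where d: "d \<in> cstar_vecs n" and yd: "y = (id1 n, pcell n id d, id1 n)"
    using carrier_pi1[OF adm] by blast
  have "pcell n id (\<lambda>i. e i * d i) = pcell n id (\<lambda>_. 1)" using y yd by (simp add: mult_pi1[OF adm] vcomp2_pcell one_pi1[OF adm])
  hence "\<forall>i\<in>{1..n}. e i * d i = 1" by (simp add: pcell_eq_iff[OF permutes_id])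
  hence "\<forall>i\<in>{1..n}. d i = 1 / e i" using e cstar_nz by (metis eq_divide_eq mult.commute)
  hence "pcell n id d = pcell n id (\<lambda>i. 1 / e i)" using pcell_cong by metis
  thus "y = (id1 n, pcell n id (\<lambda>i. 1 / e i), id1 n)" using yd by simp
qed

lemma carrier_pi0_char: "X \<in> carrier (pi0 (EquivMat n Pm)) \<Longrightarrow> alpha n Pm X permutes {1..n} \<and> X = cls n Pm (alpha n Pm X)"
  using carrier_pi0[OF adm] alpha_cls[OF adm] by force

lemma sinh_thm: "sinh_trivial (EquivMat n Pm)"
  unfolding sinh_trivial_def
proof (intro allI impI)
  fix rep phi
  let ?H = "EquivMat n Pm"
  let ?C = "carrier (pi0 ?H)"
  assume H: "(\<forall>X\<in>?C. rep X \<in> X) \<and>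
    (\<forall>X\<in>?C. \<forall>Y\<in>?C. iso_mor ?H (tg_tens ?H (rep X) (rep Y)) (rep (X \<otimes>\<^bsub>pi0 ?H\<^esub> Y)) (phi X Y))"
  define r where "r X = alpha n Pm X" for X
  have Cc: "r X permutes {1..n} \<and> X = cls n Pm (r X)" if "X \<in> ?C" for X
    using carrier_pi0_char[OF that] unfolding r_def .
  have repX: "rep X \<in> tg_obj ?H \<and> fst (rep X) = Pmat n (r X) \<and> is_gauge n (Pmat n (r X)) (snd (rep X))"
    if X: "X \<in> ?C" for X
  proof -
    have "rep X \<in> cls n Pm (r X)" using H X Cc[OF X] by metis
    hence "rep X \<in> tg_obj ?H" "fst (rep X) = Pmat n (r X)" by (auto simp: cls_def[OF adm])
    thus ?thesis using gauge_of_obj[OF adm] by blast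
  qed
  have mulC: "X \<otimes>\<^bsub>pi0 ?H\<^esub> Y \<in> ?C \<and> r (X \<otimes>\<^bsub>pi0 ?H\<^esub> Y) = r X \<circ> r Y" if X: "X \<in> ?C" and Y: "Y \<in> ?C" for X Y
  proof -
    have st: "r X \<circ> r Y permutes {1..n}" using Cc[OF X] Cc[OF Y] permutes_compose by blast
    have e: "X \<otimes>\<^bsub>pi0 ?H\<^esub> Y = cls n Pm (r X \<circ> r Y)"
      using Cc[OF X] Cc[OF Y] mult_pi0[OF adm] by metis
    show ?thesis using e st carrier_pi0[OF adm] alpha_cls[OF adm st] unfolding r_def by auto
  qed
  define cc where "cc X Y = cvec n (r X \<circ> r Y) (fst (snd (phi X Y)))" for X Y
  have phiF: "phi X Y = (comp1 n Pm (rep X) (rep Y), pcell n (r X \<circ> r Y) (cc X Y), rep (X \<otimes>\<^bsub>pi0 ?H\<^esub> Y))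
      \<and> cc X Y \<in> cstar_vecs n" if X: "X \<in> ?C" and Y: "Y \<in> ?C" for X Y
  proof -
    have st: "r X \<circ> r Y permutes {1..n}" using Cc[OF X] Cc[OF Y] permutes_compose by blast
    have "iso_mor ?H (comp1 n Pm (rep X) (rep Y)) (rep (X \<otimes>\<^bsub>pi0 ?H\<^esub> Y)) (phi X Y)"
      using H X Y by (simp add: H_tens)
    then obtain T where pT: "phi X Y = (comp1 n Pm (rep X) (rep Y), T, rep (X \<otimes>\<^bsub>pi0 ?H\<^esub> Y))"
      and T: "inv_twocell n (comp1 n Pm (rep X) (rep Y)) (rep (X \<otimes>\<^bsub>pi0 ?H\<^esub> Y)) T"
      unfolding iso_mor_def by (auto simp: H_hom)
    have f1: "fst (comp1 n Pm (rep X) (rep Y)) = Pmat n (r X \<circ> r Y)"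
      using repX[OF X] repX[OF Y] Cc[OF X] Cc[OF Y] by (simp add: mmul_Pmat)
    have f2: "fst (rep (X \<otimes>\<^bsub>pi0 ?H\<^esub> Y)) = Pmat n (r X \<circ> r Y)"
      using repX[of "X \<otimes>\<^bsub>pi0 ?H\<^esub> Y"] mulC[OF X Y] by simp
    note i = inv_twocell_pcell[OF st f1 f2 T]
    show ?thesis using pT i unfolding cc_def by simp
  qed
  define e where "e X Y = (\<lambda>i. if i \<in> {1..n} then 1 / cc X Y i else 1)" for X Y
  have eC: "e X Y \<in> cstar_vecs n" if "X \<in> ?C" "Y \<in> ?C" for X Y
  proof -
    have cc: "cc X Y \<in> cstar_vecs n" using phiF[OF that] by blast
    have "e X Y i \<noteq> 0" if i: "i \<in> {1..n}" for i
      using cstar_nz[OF cc i] i unfolding e_def by simp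
    moreover have "e X Y i = 1" if "i \<notin> {1..n}" for i using that unfolding e_def by simp
    ultimately show ?thesis unfolding cstar_vecs_def by blast
  qed
  show "\<exists>h. (\<forall>X\<in>?C. \<forall>Y\<in>?C. h X Y \<in> carrier (pi1 ?H)) \<and>
           (\<forall>X\<in>?C. \<forall>Y\<in>?C. \<forall>Z\<in>?C.
              sinh_cocycle ?H rep phi X Y Z =
                act ?H (rep X) (h Y Z) \<otimes>\<^bsub>pi1 ?H\<^esub> inv\<^bsub>pi1 ?H\<^esub> (h (X \<otimes>\<^bsub>pi0 ?H\<^esub> Y) Z)
                \<otimes>\<^bsub>pi1 ?H\<^esub> h X (Y \<otimes>\<^bsub>pi0 ?H\<^esub> Z) \<otimes>\<^bsub>pi1 ?H\<^esub> inv\<^bsub>pi1 ?H\<^esub> (h X Y))"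
  proof (intro exI[of _ "\<lambda>X Y. (id1 n, pcell n id (e X Y), id1 n)"] conjI ballI)
    fix X Y assume "X \<in> ?C" "Y \<in> ?C"
    thus "(id1 n, pcell n id (e X Y), id1 n) \<in> carrier (pi1 ?H)" using eC carrier_pi1[OF adm] by blast
  next
    fix X Y Z assume X: "X \<in> ?C" and Y: "Y \<in> ?C" and Z: "Z \<in> ?C"
    define a where "a = r X"
    define b where "b = r Y"
    define c where "c = r Z"
    have a: "a permutes {1..n}" and b: "b permutes {1..n}" and c: "c permutes {1..n}"
      using Cc X Y Z unfolding a_def b_def c_def by auto
    have ab: "a \<circ> b permutes {1..n}" using a b permutes_compose by blast
    have bc: "b \<circ> c permutes {1..n}" using b c permutes_compose by blast
    have abc: "a \<circ> b \<circ> c permutes {1..n}" using ab c permutes_compose by blast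
    define XY where "XY = X \<otimes>\<^bsub>pi0 ?H\<^esub> Y"
    define YZ where "YZ = Y \<otimes>\<^bsub>pi0 ?H\<^esub> Z"
    define XYZ where "XYZ = XY \<otimes>\<^bsub>pi0 ?H\<^esub> Z"
    have XY: "XY \<in> ?C" "r XY = a \<circ> b" using mulC[OF X Y] unfolding XY_def a_def b_def by auto
    have YZ: "YZ \<in> ?C" "r YZ = b \<circ> c" using mulC[OF Y Z] unfolding YZ_def c_def b_def by auto
    have XYZ: "XYZ \<in> ?C" "r XYZ = a \<circ> b \<circ> c" using mulC[OF XY(1) Z] XY unfolding XYZ_def c_def by auto
    have XYZ': "X \<otimes>\<^bsub>pi0 ?H\<^esub> YZ = XYZ"
    proof -
      have "X \<otimes>\<^bsub>pi0 ?H\<^esub> YZ \<in> ?C" "r (X \<otimes>\<^bsub>pi0 ?H\<^esub> YZ) = a \<circ> b \<circ> c"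
        using mulC[OF X YZ(1)] YZ unfolding a_def by (auto simp: o_assoc)
      thus ?thesis using Cc XYZ by metis
    qed
    define RX where "RX = rep X"
    define RY where "RY = rep Y"
    define RZ where "RZ = rep Z"
    define RXY where "RXY = rep XY"
    define RYZ where "RYZ = rep YZ"
    define RXYZ where "RXYZ = rep XYZ"
    have fX: "fst RX = Pmat n a" "is_gauge n (Pmat n a) (snd RX)" "RX \<in> tg_obj ?H"
      using repX[OF X] unfolding RX_def a_def by auto
    have fY: "fst RY = Pmat n b" "is_gauge n (Pmat n b) (snd RY)" "RY \<in> tg_obj ?H"
      using repX[OF Y] unfolding RY_def b_def by auto
    have fZ: "fst RZ = Pmat n c" "is_gauge n (Pmat n c) (snd RZ)" "RZ \<in> tg_obj ?H"
      using repX[OF Z] unfolding RZ_def c_def by auto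
    have fXY: "fst RXY = Pmat n (a \<circ> b)" "is_gauge n (Pmat n (a \<circ> b)) (snd RXY)"
      using repX[OF XY(1)] XY unfolding RXY_def by auto
    have fYZ: "fst RYZ = Pmat n (b \<circ> c)" "is_gauge n (Pmat n (b \<circ> c)) (snd RYZ)"
      using repX[OF YZ(1)] YZ unfolding RYZ_def by auto
    have fXYZ: "fst RXYZ = Pmat n (a \<circ> b \<circ> c)" "RXYZ \<in> tg_obj ?H"
      using repX[OF XYZ(1)] XYZ unfolding RXYZ_def by auto
    have cXY: "comp1 n Pm RX RY \<in> tg_obj ?H" "fst (comp1 n Pm RX RY) = Pmat n (a \<circ> b)"
      "is_gauge n (Pmat n (a \<circ> b)) (snd (comp1 n Pm RX RY))"
      using comp1_onemor[OF a b adm _ fX(1) _ fY(1)] fX fY obj_iff ab unfolding is_onemor_def by auto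
    have cYZ: "is_onemor n (comp1 n Pm RY RZ)" "fst (comp1 n Pm RY RZ) = Pmat n (b \<circ> c)"
      using comp1_onemor[OF b c adm _ fY(1) _ fZ(1)] fY fZ obj_iff by auto
    hence cYZg: "is_gauge n (Pmat n (b \<circ> c)) (snd (comp1 n Pm RY RZ))" unfolding is_onemor_def by simp
    have fXYZc: "fst (comp1 n Pm (comp1 n Pm RX RY) RZ) = Pmat n (a \<circ> b \<circ> c)"
      using cXY fZ by (simp add: mmul_Pmat[OF ab c])
    have pXY: "phi X Y = (comp1 n Pm RX RY, pcell n (a \<circ> b) (cc X Y), RXY)" and ccXY: "cc X Y \<in> cstar_vecs n"
      using phiF[OF X Y] unfolding RX_def RY_def RXY_def XY_def a_def b_def by auto
    have pYZ: "phi Y Z = (comp1 n Pm RY RZ, pcell n (b \<circ> c) (cc Y Z), RYZ)" and ccYZ: "cc Y Z \<in> cstar_vecs n"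
      using phiF[OF Y Z] unfolding RY_def RZ_def RYZ_def YZ_def b_def c_def by auto
    have pXY_Z: "phi XY Z = (comp1 n Pm RXY RZ, pcell n (a \<circ> b \<circ> c) (cc XY Z), RXYZ)" and ccXY_Z: "cc XY Z \<in> cstar_vecs n"
      using phiF[OF XY(1) Z] XY unfolding RXY_def RZ_def RXYZ_def XYZ_def c_def by auto
    have pX_YZ: "phi X YZ = (comp1 n Pm RX RYZ, pcell n (a \<circ> b \<circ> c) (cc X YZ), RXYZ)" and ccX_YZ: "cc X YZ \<in> cstar_vecs n"
      using phiF[OF X YZ(1)] YZ XYZ' unfolding RX_def RYZ_def RXYZ_def a_def by (auto simp: o_assoc)
    have t1: "tg_tensm ?H (phi X Y) (tg_id ?H RZ) =
        (comp1 n Pm (comp1 n Pm RX RY) RZ, pcell n (a \<circ> b \<circ> c) (cc X Y), comp1 n Pm RXY RZ)"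
    proof -
      have "hcomp2 n (comp1 n Pm RX RY) RXY (pcell n (a \<circ> b) (cc X Y)) RZ RZ (pcell n c (\<lambda>_. 1))
          = pcell n (a \<circ> b \<circ> c) (\<lambda>k. cc X Y k * 1)"
        by (rule hcomp2_pcell[OF ab c cXY(3) fXY(2) fZ(1) fZ(1)])
      thus ?thesis unfolding pXY by (simp add: H_id H_tensm fZ id2_Pmat)
    qed
    have path1: "tg_comp ?H (phi XY Z) (tg_tensm ?H (phi X Y) (tg_id ?H RZ)) =
        (comp1 n Pm (comp1 n Pm RX RY) RZ, pcell n (a \<circ> b \<circ> c) (\<lambda>k. cc XY Z k * cc X Y k), RXYZ)"
      unfolding t1 pXY_Z by (simp add: H_comp vcomp2_pcell)
    have t2: "tg_tensm ?H (tg_id ?H RX) (phi Y Z) =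
        (comp1 n Pm RX (comp1 n Pm RY RZ), pcell n (a \<circ> b \<circ> c) (\<lambda>k. cc Y Z (pinv a k)), comp1 n Pm RX RYZ)"
    proof -
      have "hcomp2 n RX RX (pcell n a (\<lambda>_. 1)) (comp1 n Pm RY RZ) RYZ (pcell n (b \<circ> c) (cc Y Z))
          = pcell n (a \<circ> (b \<circ> c)) (\<lambda>k. 1 * cc Y Z (pinv a k))"
        by (rule hcomp2_pcell[OF a bc fX(2) fX(2) cYZ(2) fYZ(1)])
      thus ?thesis unfolding pYZ by (simp add: H_id H_tensm fX id2_Pmat o_assoc)
    qed
    have as: "tg_assoc ?H RX RY RZ = (comp1 n Pm (comp1 n Pm RX RY) RZ, pcell n (a \<circ> b \<circ> c) (\<lambda>_. 1), comp1 n Pm RX (comp1 n Pm RY RZ))"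
      unfolding H_assoc fXYZc id2_Pmat by (rule refl)
    have path2: "tg_comp ?H (phi X YZ) (tg_comp ?H (tg_tensm ?H (tg_id ?H RX) (phi Y Z)) (tg_assoc ?H RX RY RZ)) =
        (comp1 n Pm (comp1 n Pm RX RY) RZ, pcell n (a \<circ> b \<circ> c) (\<lambda>k. cc X YZ k * cc Y Z (pinv a k)), RXYZ)"
      unfolding t2 as pX_YZ by (simp add: H_comp vcomp2_pcell)
    define q where "q k = cc X YZ k * cc Y Z (pinv a k)" for k
    have qnz: "q k \<noteq> 0" if k: "k \<in> {1..n}" for k
    proof -
      have ak: "pinv a k \<in> {1..n}" using k perm_inv_in[OF a] by simp
      have "cc Y Z (pinv a k) \<noteq> 0" by (rule cstar_nz[OF ccYZ ak])
      moreover have "cc X YZ k \<noteq> 0" by (rule cstar_nz[OF ccX_YZ k])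
      ultimately show ?thesis unfolding q_def by simp
    qed
    have inv2: "invm ?H (comp1 n Pm (comp1 n Pm RX RY) RZ) RXYZ
        (comp1 n Pm (comp1 n Pm RX RY) RZ, pcell n (a \<circ> b \<circ> c) q, RXYZ)
        = (RXYZ, pcell n (a \<circ> b \<circ> c) (\<lambda>k. 1 / q k), comp1 n Pm (comp1 n Pm RX RY) RZ)"
      by (rule invm_pcell[OF abc fXYZc fXYZ(1) qnz])
    define w where "w k = (if k \<in> {1..n} then cc XY Z k * cc X Y k * (1 / q k) else 1)" for k
    have wC: "w \<in> cstar_vecs n"
    proof -
      have "w i \<noteq> 0" if i: "i \<in> {1..n}" for i
        using cstar_nz[OF ccXY_Z i] cstar_nz[OF ccXY i] qnz[OF i] i unfolding w_def by simp
      moreover have "w i = 1" if "i \<notin> {1..n}" for i using that unfolding w_def by simp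
      ultimately show ?thesis unfolding cstar_vecs_def by blast
    qed
    have comp12: "tg_comp ?H (tg_comp ?H (phi XY Z) (tg_tensm ?H (phi X Y) (tg_id ?H RZ)))
        (invm ?H (tg_tens ?H (tg_tens ?H RX RY) RZ) RXYZ
          (tg_comp ?H (phi X YZ) (tg_comp ?H (tg_tensm ?H (tg_id ?H RX) (phi Y Z)) (tg_assoc ?H RX RY RZ))))
        = (RXYZ, pcell n (a \<circ> b \<circ> c) w, RXYZ)"
    proof -
      have "pcell n (a \<circ> b \<circ> c) (\<lambda>k. cc XY Z k * cc X Y k * (1 / q k)) = pcell n (a \<circ> b \<circ> c) w"
        by (rule pcell_cong) (simp add: w_def)
      thus ?thesis unfolding path1 path2 q_def[symmetric] H_tens inv2 by (simp add: H_comp vcomp2_pcell)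
    qed
    have LHS: "sinh_cocycle ?H rep phi X Y Z = (id1 n, pcell n id w, id1 n)"
    proof -
      have "sinh_cocycle ?H rep phi X Y Z = gam_inv ?H RXYZ (RXYZ, pcell n (a \<circ> b \<circ> c) w, RXYZ)"
        using comp12 XYZ' unfolding sinh_cocycle_def Let_def XY_def[symmetric] YZ_def[symmetric]
          XYZ_def[symmetric] RX_def[symmetric] RY_def[symmetric] RZ_def[symmetric] RXYZ_def[symmetric]
        by (simp add: RXYZ_def[symmetric])
      also have "\<dots> = (id1 n, pcell n id w, id1 n)"
        by (rule gam_inv_pcell[OF adm fXYZ(2) abc fXYZ(1) wC])
      finally show ?thesis .
    qed
    have eYZ: "e Y Z \<in> cstar_vecs n" using eC[OF Y Z] .
    have eXY_Z: "e XY Z \<in> cstar_vecs n" using eC[OF XY(1) Z] .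
    have eX_YZ: "e X YZ \<in> cstar_vecs n" using eC[OF X YZ(1)] .
    have eXY: "e X Y \<in> cstar_vecs n" using eC[OF X Y] .
    have actt: "act ?H (rep X) (id1 n, pcell n id (e Y Z), id1 n) = (id1 n, pcell n id (perm_vec a (e Y Z)), id1 n)"
      using act_pcell[OF adm fX(3) a fX(1) eYZ] unfolding RX_def .
    have RHS: "act ?H (rep X) (id1 n, pcell n id (e Y Z), id1 n) \<otimes>\<^bsub>pi1 ?H\<^esub> inv\<^bsub>pi1 ?H\<^esub> (id1 n, pcell n id (e XY Z), id1 n)
                \<otimes>\<^bsub>pi1 ?H\<^esub> (id1 n, pcell n id (e X YZ), id1 n) \<otimes>\<^bsub>pi1 ?H\<^esub> inv\<^bsub>pi1 ?H\<^esub> (id1 n, pcell n id (e X Y), id1 n)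
        = (id1 n, pcell n id (\<lambda>k. perm_vec a (e Y Z) k * (1 / e XY Z k) * e X YZ k * (1 / e X Y k)), id1 n)"
      unfolding actt inv_pi1[OF eXY_Z] inv_pi1[OF eXY] by (simp add: mult_pi1[OF adm] vcomp2_pcell)
    have "pcell n id w = pcell n id (\<lambda>k. perm_vec a (e Y Z) k * (1 / e XY Z k) * e X YZ k * (1 / e X Y k))"
    proof (rule pcell_cong)
      fix k assume k: "k \<in> {1..n}"
      have ak: "pinv a k \<in> {1..n}" using k perm_inv_in[OF a] by simp
      have nz: "cc XY Z k \<noteq> 0" "cc X Y k \<noteq> 0" "cc X YZ k \<noteq> 0" "cc Y Z (pinv a k) \<noteq> 0"
        using cstar_nz[OF ccXY_Z k] cstar_nz[OF ccXY k] cstar_nz[OF ccX_YZ k] cstar_nz[OF ccYZ ak] by auto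
      show "w k = perm_vec a (e Y Z) k * (1 / e XY Z k) * e X YZ k * (1 / e X Y k)"
        using k ak nz unfolding w_def q_def e_def perm_vec_def by (simp add: field_simps)
    qed
    thus "sinh_cocycle ?H rep phi X Y Z =
        act ?H (rep X) (id1 n, pcell n id (e Y Z), id1 n) \<otimes>\<^bsub>pi1 ?H\<^esub> inv\<^bsub>pi1 ?H\<^esub> (id1 n, pcell n id (e (X \<otimes>\<^bsub>pi0 ?H\<^esub> Y) Z), id1 n)
        \<otimes>\<^bsub>pi1 ?H\<^esub> (id1 n, pcell n id (e X (Y \<otimes>\<^bsub>pi0 ?H\<^esub> Z)), id1 n) \<otimes>\<^bsub>pi1 ?H\<^esub> inv\<^bsub>pi1 ?H\<^esub> (id1 n, pcell n id (e X Y), id1 n)"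
      using LHS RHS unfolding XY_def YZ_def by simp
  qed
qed

lemma part2: "\<exists>\<alpha> \<beta>. \<alpha> \<in> iso (pi0 (EquivMat n Pm)) (sym_group n)
          \<and> \<beta> \<in> iso (pi1 (EquivMat n Pm)) (cstar_group n)
          \<and> (\<forall>A \<in> tg_obj (EquivMat n Pm). \<forall>u \<in> carrier (pi1 (EquivMat n Pm)).
               \<beta> (act (EquivMat n Pm) A u) = perm_vec (\<alpha> (isoclass (EquivMat n Pm) A)) (\<beta> u))"
  using alpha_iso[OF adm] beta_iso[OF adm] action_thm[OF adm] by blast

end

theorem mainTheorem6:
  fixes n :: nat
    and Pm :: "(nat \<Rightarrow> nat) \<Rightarrow> (nat \<Rightarrow> nat \<Rightarrow> nat) \<Rightarrow> (nat \<Rightarrow> nat) \<Rightarrow> complex mat"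
  assumes "n \<ge> 1"
    and "admissible_P n Pm"
  shows "pi0 (EquivMat n Pm) \<cong> sym_group n
    \<and> (\<exists>\<alpha> \<beta>. \<alpha> \<in> iso (pi0 (EquivMat n Pm)) (sym_group n)
          \<and> \<beta> \<in> iso (pi1 (EquivMat n Pm)) (cstar_group n)
          \<and> (\<forall>A \<in> tg_obj (EquivMat n Pm). \<forall>u \<in> carrier (pi1 (EquivMat n Pm)).
               \<beta> (act (EquivMat n Pm) A u) = perm_vec (\<alpha> (isoclass (EquivMat n Pm) A)) (\<beta> u)))
    \<and> sinh_trivial (EquivMat n Pm)
    \<and> (\<exists>F0 F1 F2 Fu. mon_equiv (Gsplit n) (EquivMat n Pm) F0 F1 F2 Fu)
    \<and> mon_equiv (Gsplit n) (EquivMat n Pm) (E0 n) (E1 n) (E2 n) (Eu n)"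
proof -
  note adm = assms(2)
  have "pi0 (EquivMat n Pm) \<cong> sym_group n" unfolding is_iso_def using alpha_iso[OF adm] by blast
  moreover note part2[OF adm]
  moreover note sinh_thm[OF adm]
  moreover have "mon_equiv (Gsplit n) (EquivMat n Pm) (E0 n) (E1 n) (E2 n) (Eu n)" by (rule E_mon_equiv[OF adm])
  ultimately show ?thesis by blast
qed


end
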